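(* Let $\mathfrak m,\mathfrak n\in\mathbb R^{+}$ with $\mathfrak m<\mathfrak n$, $\Omega=[\mathfrak m,\mathfrak n]$, $\sigma>0$, and let $\Phi\colon\Omega\to\mathbb R$ be an increasing differentiable function with $\Phi'(\ell)\neq 0$ for all $\ell\in\Omega$. Let $0<\kappa<\mu\le 1$, $\varrho>0$, $h\in C(\Omega,\mathbb R)$ and $\alpha\in C([\mathfrak m-\sigma,\mathfrak m],\mathbb R)$. Then the linear problem $$ \begin{cases} {^{c}\mathbb{D}}_{\mathfrak m^{+}}^{\mu;\Phi}\mathfrak z(\ell)+\varrho\,{^{c}\mathbb{D}}_{\mathfrak m^{+}}^{\kappa;\Phi}\mathfrak z(\ell)=h(\ell), & \ell\in[\mathfrak m,\mathfrak n],\\ \mathfrak z(\ell)=\alpha(\ell), & \ell\in[\mathfrak m-\sigma,\mathfrak m], \end{cases} $$ has a unique solution, given explicitly by $$ \mathfrak z(\ell)=\begin{cases} \alpha(\mathfrak m)+\displaystyle\int_{\mathfrak m}^{\ell}\Phi'(\eta)(\Phi(\ell)-\Phi(\eta))^{\mu-1}\,\mathbb M_{\mu-\kappa,\mu}\bigl(-\varrho(\Phi(\ell)-\Phi(\eta))^{\mu-\kappa}\bigr)h(\eta)\,\mathrm d\eta, & \ell\in[\mathfrak m,\mathfrak n],\\ \alpha(\ell), & \ell\in[\mathfrak m-\sigma,\mathfrak m]. \end{cases} $$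
   Context: Mittag-Leffler functions: for $p,q>0$ and $\vartheta\in\mathbb R$, $\mathbb M_{p}(\vartheta)=\sum_{k\ge0}\frac{\vartheta^k}{\Gamma(pk+1)}$ and $\mathbb M_{p,q}(\vartheta)=\sum_{k\ge0}\frac{\vartheta^k}{\Gamma(pk+q)}$. The $\Phi$-Riemann–Liouville fractional integral of order $\gamma>0$ of an integrable $\mathfrak z\colon\Omega\to\mathbb R$ is $\mathbb I_{\mathfrak m^+}^{\gamma;\Phi}\mathfrak z(\ell)=\frac{1}{\Gamma(\gamma)}\int_{\mathfrak m}^{\ell}\Phi'(\eta)(\Phi(\ell)-\Phi(\eta))^{\gamma-1}\mathfrak z(\eta)\,\mathrm d\eta$. For $0<\gamma<1$, the $\Phi$-Caputo fractional derivative of order $\gamma$ of $\mathfrak z\in C^1(\Omega,\mathbb R)$ is ${^{c}\mathbb D}_{\mathfrak m^+}^{\gamma;\Phi}\mathfrak z(\ell)=\mathbb I_{\mathfrak m^+}^{1-\gamma;\Phi}\Bigl(\frac{\mathfrak z'(\cdot)}{\Phi'(\cdot)}\Bigr)(\ell)$, and for $\gamma=1$ it is $\frac{\mathfrak z'(\ell)}{\Phi'(\ell)}$.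
   Formalization: For $0<\gamma<1$ the $\Phi$-Caputo derivative is $1/\Phi'(\ell)$ times the derivative within $\Omega$ of $\mathbb I_{\mathfrak m^+}^{1-\gamma;\Phi}$ applied to $\mathfrak z-\mathfrak z(\mathfrak m)$, and solutions are functions continuous on $[\mathfrak m-\sigma,\mathfrak n]$ with both derivatives existing on $\Omega$, not $C^1$. The statement above fails without it. *)

theory Defs
  imports "HOL-Analysis.Analysis"
begin

definition ML1 :: "real \<Rightarrow> real \<Rightarrow> real" where
  "ML1 p x = (\<Sum>k. x ^ k / Gamma (p * real k + 1))"

definition ML2 :: "real \<Rightarrow> real \<Rightarrow> real \<Rightarrow> real" where
  "ML2 p q x = (\<Sum>k. x ^ k / Gamma (p * real k + q))"

text \<open>Phi-Riemann-Liouville fractional integral of order gamma with lower limit m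
  (Phi' is the derivative of Phi, passed explicitly).\<close>
definition RL_int ::
  "real \<Rightarrow> (real \<Rightarrow> real) \<Rightarrow> (real \<Rightarrow> real) \<Rightarrow> real \<Rightarrow> (real \<Rightarrow> real) \<Rightarrow> real \<Rightarrow> real" where
  "RL_int m \<Phi> \<Phi>' \<gamma> f l =
     (1 / Gamma \<gamma>) * (LINT \<eta>:{m..l}|lborel. \<Phi>' \<eta> * (\<Phi> l - \<Phi> \<eta>) powr (\<gamma> - 1) * f \<eta>)"

text \<open>Phi-Caputo derivative of order gamma in (0,1] on the interval [m,n].
  For gamma = 1 it is z'/Phi'. For 0 < gamma < 1 we use the standard form
  (1/Phi') d/dl I^{1-gamma}(z - z(m)), which coincides with I^{1-gamma}(z'/Phi')
  for z in C^1. Derivatives are taken within [m,n].\<close>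
definition caputo ::
  "real \<Rightarrow> real \<Rightarrow> (real \<Rightarrow> real) \<Rightarrow> (real \<Rightarrow> real) \<Rightarrow> real \<Rightarrow> (real \<Rightarrow> real) \<Rightarrow> real \<Rightarrow> real" where
  "caputo m n \<Phi> \<Phi>' \<gamma> z l =
     (if \<gamma> = 1 then vector_derivative z (at l within {m..n}) / \<Phi>' l
      else vector_derivative (\<lambda>t. RL_int m \<Phi> \<Phi>' (1 - \<gamma>) (\<lambda>\<eta>. z \<eta> - z m) t)
                (at l within {m..n}) / \<Phi>' l)"

definition caputo_exists ::
  "real \<Rightarrow> real \<Rightarrow> (real \<Rightarrow> real) \<Rightarrow> (real \<Rightarrow> real) \<Rightarrow> real \<Rightarrow> (real \<Rightarrow> real) \<Rightarrow> real \<Rightarrow> bool" where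
  "caputo_exists m n \<Phi> \<Phi>' \<gamma> z l =
     (if \<gamma> = 1 then z differentiable (at l within {m..n})
      else (\<lambda>t. RL_int m \<Phi> \<Phi>' (1 - \<gamma>) (\<lambda>\<eta>. z \<eta> - z m) t) differentiable (at l within {m..n}))"

definition is_solution ::
  "real \<Rightarrow> real \<Rightarrow> real \<Rightarrow> (real \<Rightarrow> real) \<Rightarrow> (real \<Rightarrow> real) \<Rightarrow> real \<Rightarrow> real \<Rightarrow> real
   \<Rightarrow> (real \<Rightarrow> real) \<Rightarrow> (real \<Rightarrow> real) \<Rightarrow> (real \<Rightarrow> real) \<Rightarrow> bool" where
  "is_solution m n \<sigma> \<Phi> \<Phi>' \<kappa> \<mu> \<rho> h \<alpha> z \<longleftrightarrow>
     continuous_on {m - \<sigma>..n} z \<and>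
     (\<forall>l\<in>{m - \<sigma>..m}. z l = \<alpha> l) \<and>
     (\<forall>l\<in>{m..n}. caputo_exists m n \<Phi> \<Phi>' \<mu> z l \<and> caputo_exists m n \<Phi> \<Phi>' \<kappa> z l \<and>
        caputo m n \<Phi> \<Phi>' \<mu> z l + \<rho> * caputo m n \<Phi> \<Phi>' \<kappa> z l = h l)"

end

theory Submission
  imports Defs
begin


lemma lborel_of_has_integral_nonneg:
  fixes f :: "real \<Rightarrow> real"
  assumes "(f has_integral I) S" "\<And>s. s \<in> S \<Longrightarrow> 0 \<le> f s"
    and "set_borel_measurable lborel S f"
  shows "set_integrable lborel S f" "(LINT s:S|lborel. f s) = I"
proof -
  have "f absolutely_integrable_on S"
    using assms(1,2) by (intro nonnegative_absolutely_integrable_1) (auto simp: has_integral_integrable)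
  then show si: "set_integrable lborel S f"
    using assms(3) unfolding absolutely_integrable_on_def set_integrable_def set_borel_measurable_def
    by (subst (asm) integrable_completion) auto
  show "(LINT s:S|lborel. f s) = I"
    using set_borel_integral_eq_integral(2)[OF si] assms(1) by (simp add: integral_unique)
qed

lemma beta_has_integral:
  fixes \<alpha> \<beta> t u :: real
  assumes "0 < \<alpha>" "0 < \<beta>" "t < u"
  shows "((\<lambda>s. (u-s) powr (\<alpha>-1) * (s-t) powr (\<beta>-1)) has_integral Beta \<alpha> \<beta> * (u-t) powr (\<alpha>+\<beta>-1)) {t..u}"
proof -
  define g where "g = (\<lambda>x::real. x powr (\<beta>-1) * (1-x) powr (\<alpha>-1))"
  have hb: "(g has_integral Beta \<beta> \<alpha>) (cbox 0 1)"
    using has_integral_Beta_real[OF assms(2,1)] by (simp add: g_def)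
  define m where "m = 1/(u-t)"
  define c where "c = -t/(u-t)"
  have m: "m > 0" using assms by (simp add: m_def)
  have "((\<lambda>x. g (m *\<^sub>R x + c)) has_integral (Beta \<beta> \<alpha> /\<^sub>R m ^ DIM(real)))
           (cbox ((0 - c) /\<^sub>R m) ((1 - c) /\<^sub>R m))"
    by (rule has_integral_affinity'[OF hb m])
  also have "(0 - c) /\<^sub>R m = t" using assms by (simp add: m_def c_def)
  also have "(1 - c) /\<^sub>R m = u" using assms by (simp add: m_def c_def field_simps)
  also have "Beta \<beta> \<alpha> /\<^sub>R m ^ DIM(real) = Beta \<beta> \<alpha> * (u-t)" using assms by (simp add: m_def)
  finally have h1: "((\<lambda>x. g (m * x + c)) has_integral (Beta \<beta> \<alpha> * (u-t))) {t..u}"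
    by simp
  have eq: "(u-t) powr (\<alpha>+\<beta>-2) * g (m * s + c) = (u-s) powr (\<alpha>-1) * (s-t) powr (\<beta>-1)"
    if "s \<in> {t..u}" for s
  proof -
    have e1: "m * s + c = (s-t)/(u-t)" using assms by (simp add: m_def c_def diff_divide_distrib)
    have e2: "1 - (s-t)/(u-t) = (u-s)/(u-t)" using assms by (simp add: field_simps)
    have "(u-t) powr (\<alpha>+\<beta>-2) = (u-t) powr (\<beta>-1) * (u-t) powr (\<alpha>-1)"
      by (simp add: powr_add[symmetric] add_ac)
    moreover have "(u-t) powr (\<beta>-1) > 0" "(u-t) powr (\<alpha>-1) > 0" using assms by auto
    ultimately show ?thesis using that assms
      unfolding g_def e1 e2 by (simp add: powr_divide field_simps)
  qed
  have "((\<lambda>x. (u-t) powr (\<alpha>+\<beta>-2) * g (m * x + c)) has_integral (u-t) powr (\<alpha>+\<beta>-2) * (Beta \<beta> \<alpha> * (u-t))) {t..u}"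
    using has_integral_mult_right[OF h1] .
  moreover have "(u-t) powr (\<alpha>+\<beta>-2) * (Beta \<beta> \<alpha> * (u-t)) = Beta \<alpha> \<beta> * (u-t) powr (\<alpha>+\<beta>-1)"
  proof -
    have "(u-t) powr (\<alpha>+\<beta>-1) = (u-t) powr ((\<alpha>+\<beta>-2) + 1)" by simp
    also have "\<dots> = (u-t) powr (\<alpha>+\<beta>-2) * (u-t)" using assms by (subst powr_add) simp
    finally show ?thesis using assms by (simp add: Beta_commute)
  qed
  ultimately show ?thesis by (intro has_integral_eq[OF eq]) auto
qed

lemma beta_lborel:
  fixes \<alpha> \<beta> t u :: real
  assumes "0 < \<alpha>" "0 < \<beta>" "t \<le> u"
  shows "set_integrable lborel {t..u} (\<lambda>s. (u-s) powr (\<alpha>-1) * (s-t) powr (\<beta>-1))"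
    and "(LINT s:{t..u}|lborel. (u-s) powr (\<alpha>-1) * (s-t) powr (\<beta>-1)) = Beta \<alpha> \<beta> * (u-t) powr (\<alpha>+\<beta>-1)"
proof -
  have meas: "set_borel_measurable lborel {t..u} (\<lambda>s. (u-s) powr (\<alpha>-1) * (s-t) powr (\<beta>-1))"
    unfolding set_borel_measurable_def by measurable
  have "set_integrable lborel {t..u} (\<lambda>s. (u-s) powr (\<alpha>-1) * (s-t) powr (\<beta>-1)) \<and>
     (LINT s:{t..u}|lborel. (u-s) powr (\<alpha>-1) * (s-t) powr (\<beta>-1)) = Beta \<alpha> \<beta> * (u-t) powr (\<alpha>+\<beta>-1)"
  proof (cases "t = u")
    case True
    have ae: "AE s in lborel. indicator {t..u} s *\<^sub>R ((u-s) powr (\<alpha>-1) * (s-t) powr (\<beta>-1)) = 0"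
      using AE_lborel_singleton[of u] by eventually_elim (use True in auto)
    have "integrable lborel (\<lambda>s. indicator {t..u} s *\<^sub>R ((u-s) powr (\<alpha>-1) * (s-t) powr (\<beta>-1)))"
      using integrable_cong_AE[OF _ _ ae] meas unfolding set_borel_measurable_def by simp
    moreover have "(LINT s:{t..u}|lborel. (u-s) powr (\<alpha>-1) * (s-t) powr (\<beta>-1)) = 0"
      unfolding set_lebesgue_integral_def using integral_cong_AE[OF _ _ ae] meas
      unfolding set_borel_measurable_def by simp
    ultimately show ?thesis using True by (simp add: set_integrable_def)
  next
    case False
    then have "t < u" using assms by simp
    from lborel_of_has_integral_nonneg[OF beta_has_integral[OF assms(1,2) this] _ meas]
    show ?thesis by auto
  qed
  then show "set_integrable lborel {t..u} (\<lambda>s. (u-s) powr (\<alpha>-1) * (s-t) powr (\<beta>-1))"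
    and "(LINT s:{t..u}|lborel. (u-s) powr (\<alpha>-1) * (s-t) powr (\<beta>-1)) = Beta \<alpha> \<beta> * (u-t) powr (\<alpha>+\<beta>-1)"
    by auto
qed

lemma Beta_1_right: assumes "0 < (g::real)" shows "Beta g 1 = 1 / g"
proof -
  have "g \<notin> \<int>\<^sub>\<le>\<^sub>0" using assms by (auto elim!: nonpos_Ints_cases)
  then have e: "Gamma (g+1) = g * Gamma g" by (rule Gamma_plus1)
  have p: "Gamma g > 0" using assms by (rule Gamma_real_pos)
  have "Beta g 1 = Gamma g / (g * Gamma g)" unfolding Beta_def e[symmetric] by simp
  then show ?thesis using p assms by simp
qed

lemma kern_lborel:
  fixes \<gamma> a u :: real
  assumes "0 < \<gamma>" "a \<le> u"
  shows "set_integrable lborel {a..u} (\<lambda>s. (u-s) powr (\<gamma>-1))"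
    and "(LINT s:{a..u}|lborel. (u-s) powr (\<gamma>-1)) = (u-a) powr \<gamma> / \<gamma>"
proof -
  have ae: "AE s in lborel. indicator {a..u} s *\<^sub>R ((u-s) powr (\<gamma>-1) * (s-a) powr (1-1))
      = indicator {a..u} s *\<^sub>R ((u-s) powr (\<gamma>-1))"
    using AE_lborel_singleton[of a] by eventually_elim (auto simp: indicator_def)
  note b = beta_lborel[OF assms(1) zero_less_one assms(2)]
  show "set_integrable lborel {a..u} (\<lambda>s. (u-s) powr (\<gamma>-1))"
    using integrable_cong_AE[OF _ _ ae] b(1) unfolding set_integrable_def
    by (simp add: borel_measurable_integrable)
  have "(LINT s:{a..u}|lborel. (u-s) powr (\<gamma>-1) * (s-a) powr (1-1)) = (LINT s:{a..u}|lborel. (u-s) powr (\<gamma>-1))"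
    unfolding set_lebesgue_integral_def by (rule integral_cong_AE[OF _ _ ae]) 
      (use b(1) \<open>set_integrable lborel {a..u} (\<lambda>s. (u-s) powr (\<gamma>-1))\<close> in \<open>auto simp: set_integrable_def borel_measurable_integrable\<close>)
  then have "(LINT s:{a..u}|lborel. (u-s) powr (\<gamma>-1)) = (LINT s:{a..u}|lborel. (u-s) powr (\<gamma>-1) * (s-a) powr (1-1))" by simp
  also have "\<dots> = (u-a) powr \<gamma> / \<gamma>" using b(2) assms by (simp add: Beta_1_right)
  finally show "(LINT s:{a..u}|lborel. (u-s) powr (\<gamma>-1)) = (u-a) powr \<gamma> / \<gamma>" .
qed

definition Jf :: "real \<Rightarrow> real \<Rightarrow> (real \<Rightarrow> real) \<Rightarrow> real \<Rightarrow> real" where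
  "Jf a \<gamma> f u = (1 / Gamma \<gamma>) * (LINT s:{a..u}|lborel. (u - s) powr (\<gamma> - 1) * f s)"

lemma cont_bound:
  fixes f :: "real \<Rightarrow> real"
  assumes "continuous_on {a..b} f"
  obtains B where "B \<ge> 0" "\<And>x. x \<in> {a..b} \<Longrightarrow> \<bar>f x\<bar> \<le> B"
proof -
  have "bounded (f ` {a..b})" by (intro compact_imp_bounded compact_continuous_image assms compact_Icc)
  then obtain B where "\<forall>x\<in>f ` {a..b}. norm x \<le> B" by (auto simp: bounded_iff)
  then have "\<forall>x\<in>{a..b}. \<bar>f x\<bar> \<le> max B 0" by (metis imageI max.coboundedI1 real_norm_def)
  then show ?thesis using that[of "max B 0"] by auto
qed

lemma set_borel_measurable_cont:
  fixes f :: "real \<Rightarrow> real"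
  assumes "continuous_on {a..b} f"
  shows "set_borel_measurable lborel {a..b} f"
  unfolding set_borel_measurable_def
  using borel_measurable_continuous_on_indicator[OF _ assms] by simp

lemma kern_times_measurable:
  fixes f :: "real \<Rightarrow> real"
  assumes "set_borel_measurable lborel {a..u} f"
  shows "set_borel_measurable lborel {a..u} (\<lambda>s. (u-s) powr (\<gamma>-1) * f s)"
proof -
  have "(\<lambda>s. (u-s) powr (\<gamma>-1) * (indicator {a..u} s *\<^sub>R f s)) \<in> borel_measurable lborel"
    using assms unfolding set_borel_measurable_def by measurable
  then show ?thesis unfolding set_borel_measurable_def by (simp add: ac_simps)
qed

lemma J_integrable_bdd:
  fixes f :: "real \<Rightarrow> real"
  assumes "0 < \<gamma>" "set_borel_measurable lborel {a..u} f" "\<And>s. s \<in> {a..u} \<Longrightarrow> \<bar>f s\<bar> \<le> B"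
  shows "set_integrable lborel {a..u} (\<lambda>s. (u-s) powr (\<gamma>-1) * f s)"
proof (cases "a \<le> u")
  case True
  have k: "set_integrable lborel {a..u} (\<lambda>s. B * (u-s) powr (\<gamma>-1))"
    using kern_lborel(1)[OF assms(1) True] by (intro set_integrable_mult_right)
  show ?thesis unfolding set_integrable_def
  proof (rule Bochner_Integration.integrable_bound[OF k[unfolded set_integrable_def]])
    show "(\<lambda>x. indicat_real {a..u} x *\<^sub>R ((u - x) powr (\<gamma> - 1) * f x)) \<in> borel_measurable lborel"
      using kern_times_measurable[OF assms(2)] unfolding set_borel_measurable_def .
    show "AE x in lborel. norm (indicat_real {a..u} x *\<^sub>R ((u - x) powr (\<gamma> - 1) * f x))
        \<le> norm (indicat_real {a..u} x *\<^sub>R (B * (u - x) powr (\<gamma> - 1)))"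
    proof (intro AE_I2)
      fix x show "norm (indicat_real {a..u} x *\<^sub>R ((u - x) powr (\<gamma> - 1) * f x))
        \<le> norm (indicat_real {a..u} x *\<^sub>R (B * (u - x) powr (\<gamma> - 1)))"
      proof (cases "x \<in> {a..u}")
        case True
        then have "\<bar>f x\<bar> \<le> B" by (rule assms(3))
        then have "(u - x) powr (\<gamma> - 1) * \<bar>f x\<bar> \<le> (u - x) powr (\<gamma> - 1) * B"
          by (intro mult_left_mono) auto
        moreover have "B \<ge> 0" using \<open>\<bar>f x\<bar> \<le> B\<close> by linarith
        ultimately show ?thesis using True by (simp add: abs_mult mult_ac)
      qed simp
    qed
  qed
next
  case False
  then show ?thesis by (simp add: set_integrable_def)
qed

lemma J_integrable:
  fixes f :: "real \<Rightarrow> real"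
  assumes "0 < \<gamma>" "continuous_on {a..u} f"
  shows "set_integrable lborel {a..u} (\<lambda>s. (u-s) powr (\<gamma>-1) * f s)"
proof -
  obtain B where "\<And>x. x \<in> {a..u} \<Longrightarrow> \<bar>f x\<bar> \<le> B" using cont_bound[OF assms(2)] by blast
  then show ?thesis using J_integrable_bdd[OF assms(1) set_borel_measurable_cont[OF assms(2)]] by blast
qed

lemma Gamma_plus1_real: "0 < (g::real) \<Longrightarrow> Gamma (g + 1) = g * Gamma g"
  by (rule Gamma_plus1) (auto elim!: nonpos_Ints_cases)

lemma J_bound:
  fixes f :: "real \<Rightarrow> real"
  assumes "0 < \<gamma>" "a \<le> u" "set_borel_measurable lborel {a..u} f" "\<And>s. s \<in> {a..u} \<Longrightarrow> \<bar>f s\<bar> \<le> B"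
  shows "\<bar>Jf a \<gamma> f u\<bar> \<le> B * (u-a) powr \<gamma> / Gamma (\<gamma> + 1)"
proof -
  note i1 = J_integrable_bdd[OF assms(1,3,4)]
  have k: "set_integrable lborel {a..u} (\<lambda>s. B * (u-s) powr (\<gamma>-1))"
    using kern_lborel(1)[OF assms(1,2)] by (intro set_integrable_mult_right)
  have kv: "(LINT s:{a..u}|lborel. B * (u-s) powr (\<gamma>-1)) = B * ((u-a) powr \<gamma> / \<gamma>)"
    using kern_lborel(2)[OF assms(1,2)] by (simp add: set_integral_mult_right)
  have le1: "(LINT s:{a..u}|lborel. (u-s) powr (\<gamma>-1) * f s) \<le> (LINT s:{a..u}|lborel. B * (u-s) powr (\<gamma>-1))"
  proof (rule set_integral_mono[OF i1 k])
    fix s assume s: "s \<in> {a..u}"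
    have "(u-s) powr (\<gamma>-1) * f s \<le> (u-s) powr (\<gamma>-1) * B"
      using assms(4)[OF s] by (intro mult_left_mono) auto
    then show "(u-s) powr (\<gamma>-1) * f s \<le> B * (u-s) powr (\<gamma>-1)" by (simp add: mult_ac)
  qed
  have i2: "set_integrable lborel {a..u} (\<lambda>s. - ((u-s) powr (\<gamma>-1) * f s))"
    using set_integrable_mult_right[of "-1", OF i1] by simp
  have le2: "(LINT s:{a..u}|lborel. - ((u-s) powr (\<gamma>-1) * f s)) \<le> (LINT s:{a..u}|lborel. B * (u-s) powr (\<gamma>-1))"
  proof (rule set_integral_mono[OF i2 k])
    fix s assume s: "s \<in> {a..u}"
    have "(u-s) powr (\<gamma>-1) * (- f s) \<le> (u-s) powr (\<gamma>-1) * B"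
      using assms(4)[OF s] by (intro mult_left_mono) auto
    then show "- ((u-s) powr (\<gamma>-1) * f s) \<le> B * (u-s) powr (\<gamma>-1)" by (simp add: mult_ac)
  qed
  have "(LINT s:{a..u}|lborel. - ((u-s) powr (\<gamma>-1) * f s)) = - (LINT s:{a..u}|lborel. (u-s) powr (\<gamma>-1) * f s)"
    using set_integral_mult_right[where a="-1" and A="{a..u}" and M=lborel] by simp
  with le1 le2 kv have "\<bar>LINT s:{a..u}|lborel. (u-s) powr (\<gamma>-1) * f s\<bar> \<le> B * ((u-a) powr \<gamma> / \<gamma>)"
    by linarith
  moreover have "Gamma \<gamma> > 0" using assms(1) by (rule Gamma_real_pos)
  moreover have "B \<ge> 0" using assms(4)[of a] assms(2) by force
  ultimately show ?thesis using Gamma_plus1_real[OF assms(1)] assms(1)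
    unfolding Jf_def by (simp add: abs_mult divide_simps mult_ac)
qed

lemma J_cong:
  assumes "\<And>s. s \<in> {a..u} \<Longrightarrow> f s = g s"
  shows "Jf a \<gamma> f u = Jf a \<gamma> g u"
  unfolding Jf_def using assms by (intro arg_cong2[where f="(*)"] refl set_lebesgue_integral_cong) auto

lemma LINT_singleton: "(LINT s:{a}|lborel. (g s::real)) = 0"
proof -
  have "(\<lambda>s. indicat_real {a} s *\<^sub>R g s) = (\<lambda>s. indicator {a} s * g a)"
    by (rule ext) (auto simp: indicator_def)
  then show ?thesis unfolding set_lebesgue_integral_def by simp
qed

lemma J_at_a: "Jf a \<gamma> f a = 0"
  unfolding Jf_def by (simp add: LINT_singleton)

lemma J_lin:
  fixes f g :: "real \<Rightarrow> real"
  assumes "0 < \<gamma>" "continuous_on {a..u} f" "continuous_on {a..u} g"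
  shows "Jf a \<gamma> (\<lambda>s. f s + c * g s) u = Jf a \<gamma> f u + c * Jf a \<gamma> g u"
proof -
  note i1 = J_integrable[OF assms(1,2)] and i2 = J_integrable[OF assms(1,3)]
  have i3: "set_integrable lborel {a..u} (\<lambda>s. c * ((u-s) powr (\<gamma>-1) * g s))"
    using i2 by (intro set_integrable_mult_right)
  have "(LINT s:{a..u}|lborel. (u-s) powr (\<gamma>-1) * (f s + c * g s)) =
     (LINT s:{a..u}|lborel. (u-s) powr (\<gamma>-1) * f s + c * ((u-s) powr (\<gamma>-1) * g s))"
    by (simp add: algebra_simps)
  also have "\<dots> = (LINT s:{a..u}|lborel. (u-s) powr (\<gamma>-1) * f s) + c * (LINT s:{a..u}|lborel. (u-s) powr (\<gamma>-1) * g s)"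
    using set_integral_add(2)[OF i1 i3] by (simp add: set_integral_mult_right)
  finally show ?thesis unfolding Jf_def by (simp add: algebra_simps)
qed

lemma J_zero: "Jf a \<gamma> (\<lambda>s. 0) u = 0"
  unfolding Jf_def by simp

lemma J_one:
  fixes f :: "real \<Rightarrow> real"
  assumes "continuous_on {a..u} f"
  shows "Jf a 1 f u = (LINT s:{a..u}|lborel. f s)"
proof -
  have ae: "AE s in lborel. indicator {a..u} s *\<^sub>R ((u-s) powr (1-1) * f s) = indicator {a..u} s *\<^sub>R f s"
    using AE_lborel_singleton[of u] by eventually_elim (auto simp: indicator_def)
  have m1: "set_borel_measurable lborel {a..u} (\<lambda>s. (u-s) powr (1-1) * f s)"
    by (rule kern_times_measurable[OF set_borel_measurable_cont[OF assms]])
  have m2: "set_borel_measurable lborel {a..u} f" by (rule set_borel_measurable_cont[OF assms])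
  have "(LINT s:{a..u}|lborel. (u-s) powr (1-1) * f s) = (LINT s:{a..u}|lborel. f s)"
    unfolding set_lebesgue_integral_def
    by (rule integral_cong_AE[OF _ _ ae]) (use m1 m2 in \<open>auto simp: set_borel_measurable_def\<close>)
  then show ?thesis unfolding Jf_def by simp
qed

lemma J_one_deriv:
  fixes G :: "real \<Rightarrow> real"
  assumes "continuous_on {a..b} G" "u \<in> {a..b}"
  shows "((\<lambda>v. Jf a 1 G v) has_vector_derivative G u) (at u within {a..b})"
proof -
  have eq: "Jf a 1 G v = integral {a..v} G" if "v \<in> {a..b}" for v
  proof -
    have c: "continuous_on {a..v} G" by (rule continuous_on_subset[OF assms(1)]) (use that in auto)
    have si: "set_integrable lborel {a..v} G"
      using J_integrable[OF zero_less_one c] J_one[OF c] 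
      by (metis (no_types) c borel_integrable_atLeastAtMost' set_integrable_def)
    show ?thesis using J_one[OF c] set_borel_integral_eq_integral(2)[OF si] by simp
  qed
  show ?thesis
    by (rule has_vector_derivative_transform_within[OF integral_has_vector_derivative[OF assms] zero_less_one assms(2)])
       (use eq in auto)
qed

lemma J_scaled:
  fixes f :: "real \<Rightarrow> real"
  assumes "a \<le> u"
  shows "(LINT s:{a..u}|lborel. (u-s) powr (\<gamma>-1) * f s) =
         (u-a) powr \<gamma> * (LINT x:{0..1}|lborel. (1-x) powr (\<gamma>-1) * f (a + (u-a) * x))"
proof (cases "a = u")
  case True
  then show ?thesis by (simp add: LINT_singleton)
next
  case False
  then have au: "a < u" using assms by simp
  have "(LINT s:{a..u}|lborel. (u-s) powr (\<gamma>-1) * f s) =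
      \<bar>u-a\<bar> *\<^sub>R (LBINT x. indicator {a..u} (a + (u-a) * x) *\<^sub>R ((u - (a + (u-a) * x)) powr (\<gamma>-1) * f (a + (u-a) * x)))"
    unfolding set_lebesgue_integral_def using au by (intro lborel_integral_real_affine) simp
  also have "(\<lambda>x. indicator {a..u} (a + (u-a) * x) *\<^sub>R ((u - (a + (u-a) * x)) powr (\<gamma>-1) * f (a + (u-a) * x)))
     = (\<lambda>x. (u-a) powr (\<gamma>-1) * (indicator {0..1} x *\<^sub>R ((1-x) powr (\<gamma>-1) * f (a + (u-a) * x))))"
  proof (rule ext)
    fix x
    have i: "indicator {a..u} (a + (u-a) * x) = (indicator {0..1} x :: real)"
    proof -
      have "a \<le> a + (u-a) * x \<longleftrightarrow> 0 \<le> x" using au by (simp add: zero_le_mult_iff)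
      moreover have "a + (u-a) * x \<le> u \<longleftrightarrow> x \<le> 1"
      proof -
        have "a + (u-a) * x \<le> u \<longleftrightarrow> (u-a) * x \<le> (u-a) * 1" by (simp add: algebra_simps)
        also have "\<dots> \<longleftrightarrow> x \<le> 1" using au by (simp add: mult_le_cancel_left)
        finally show ?thesis .
      qed
      ultimately show ?thesis by (simp add: indicator_def)
    qed
    have "u - (a + (u-a) * x) = (u-a) * (1-x)" by (simp add: algebra_simps)
    then show "indicator {a..u} (a + (u-a) * x) *\<^sub>R ((u - (a + (u-a) * x)) powr (\<gamma>-1) * f (a + (u-a) * x))
      = (u-a) powr (\<gamma>-1) * (indicator {0..1} x *\<^sub>R ((1-x) powr (\<gamma>-1) * f (a + (u-a) * x)))"
      unfolding i by (simp add: powr_mult)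
  qed
  also have "\<bar>u-a\<bar> *\<^sub>R (LBINT x. (u-a) powr (\<gamma>-1) * (indicator {0..1} x *\<^sub>R ((1-x) powr (\<gamma>-1) * f (a + (u-a) * x))))
     = (u-a) * (u-a) powr (\<gamma>-1) * (LINT x:{0..1}|lborel. (1-x) powr (\<gamma>-1) * f (a + (u-a) * x))"
    using au unfolding set_lebesgue_integral_def by (simp add: integral_mult_right_zero)
  also have "(u-a) * (u-a) powr (\<gamma>-1) = (u-a) powr \<gamma>"
    using au by (simp add: powr_mult_base)
  finally show ?thesis .
qed

lemma J_cont_UNIV:
  fixes f :: "real \<Rightarrow> real"
  assumes "0 < \<gamma>" "continuous_on UNIV f" "a \<le> b"
  shows "continuous_on {a..b} (Jf a \<gamma> f)"
proof -
  obtain B where B: "B \<ge> 0" "\<And>x. x \<in> {a..b} \<Longrightarrow> \<bar>f x\<bar> \<le> B"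
    using cont_bound[OF continuous_on_subset[OF assms(2)]] by blast
  define I where "I = (\<lambda>u. LINT x:{0..1}|lborel. (1-x) powr (\<gamma>-1) * f (a + (u-a) * x))"
  have eqJ: "Jf a \<gamma> f u = (1 / Gamma \<gamma>) * ((u-a) powr \<gamma> * I u)" if "u \<in> {a..b}" for u
    using J_scaled[of a u \<gamma> f] that unfolding Jf_def I_def by simp
  have contI: "continuous_on {a..b} I"
  proof (rule continuous_on_sequentiallyI)
    fix xs :: "nat \<Rightarrow> real" and u assume xs: "\<forall>n. xs n \<in> {a..b}" "u \<in> {a..b}" "xs \<longlonglongrightarrow> u"
    have fm: "\<And>v. (\<lambda>x. f (a + (v-a) * x)) \<in> borel_measurable lborel"
    proof -
      fix v
      have "continuous_on UNIV (\<lambda>x. f (a + (v-a) * x))"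
        by (intro continuous_on_compose2[OF assms(2)] continuous_intros) auto
      then show "(\<lambda>x. f (a + (v-a) * x)) \<in> borel_measurable lborel"
        using borel_measurable_continuous_onI by simp
    qed
    have km: "(\<lambda>x. (1-x) powr (\<gamma>-1)) \<in> borel_measurable lborel" by measurable
    show "(\<lambda>n. I (xs n)) \<longlonglongrightarrow> I u"
      unfolding I_def set_lebesgue_integral_def
    proof (rule integral_dominated_convergence[where w="\<lambda>x. indicator {0..1} x *\<^sub>R (B * (1-x) powr (\<gamma>-1))"])
      show "(\<lambda>x. indicat_real {0..1} x *\<^sub>R ((1 - x) powr (\<gamma> - 1) * f (a + (u - a) * x))) \<in> borel_measurable lborel"
        by (intro borel_measurable_scaleR borel_measurable_times km fm borel_measurable_indicator) auto
      show "(\<lambda>x. indicat_real {0..1} x *\<^sub>R ((1 - x) powr (\<gamma> - 1) * f (a + (xs i - a) * x))) \<in> borel_measurable lborel" for i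
        by (intro borel_measurable_scaleR borel_measurable_times km fm borel_measurable_indicator) auto
      show "integrable lborel (\<lambda>x. indicat_real {0..1} x *\<^sub>R (B * (1 - x) powr (\<gamma> - 1)))"
        using set_integrable_mult_right[OF kern_lborel(1)[OF assms(1), of 0 1], of B]
        unfolding set_integrable_def by simp
      show "AE x in lborel. (\<lambda>i. indicat_real {0..1} x *\<^sub>R ((1 - x) powr (\<gamma> - 1) * f (a + (xs i - a) * x)))
          \<longlonglongrightarrow> indicat_real {0..1} x *\<^sub>R ((1 - x) powr (\<gamma> - 1) * f (a + (u - a) * x))"
      proof (intro AE_I2)
        fix x
        have "(\<lambda>i. a + (xs i - a) * x) \<longlonglongrightarrow> a + (u - a) * x"
          by (intro tendsto_add tendsto_const tendsto_mult tendsto_diff xs(3))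
        moreover have "isCont f (a + (u-a) * x)" using assms(2) by (simp add: continuous_on_eq_continuous_at)
        ultimately have "(\<lambda>i. f (a + (xs i - a) * x)) \<longlonglongrightarrow> f (a + (u - a) * x)"
          using isCont_tendsto_compose by blast
        then show "(\<lambda>i. indicat_real {0..1} x *\<^sub>R ((1 - x) powr (\<gamma> - 1) * f (a + (xs i - a) * x)))
          \<longlonglongrightarrow> indicat_real {0..1} x *\<^sub>R ((1 - x) powr (\<gamma> - 1) * f (a + (u - a) * x))"
          by (intro tendsto_scaleR tendsto_const tendsto_mult)
      qed
      show "AE x in lborel. norm (indicat_real {0..1} x *\<^sub>R ((1 - x) powr (\<gamma> - 1) * f (a + (xs i - a) * x)))
          \<le> indicat_real {0..1} x *\<^sub>R (B * (1 - x) powr (\<gamma> - 1))" for i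
      proof (intro AE_I2)
        fix x
        show "norm (indicat_real {0..1} x *\<^sub>R ((1 - x) powr (\<gamma> - 1) * f (a + (xs i - a) * x)))
          \<le> indicat_real {0..1} x *\<^sub>R (B * (1 - x) powr (\<gamma> - 1))"
        proof (cases "x \<in> {0..1}")
          case True
          have xi: "xs i \<in> {a..b}" using xs(1) by auto
          have "a \<le> a + (xs i - a) * x" using True xi by auto
          moreover have "a + (xs i - a) * x \<le> b"
          proof -
            have "(xs i - a) * x \<le> (xs i - a) * 1" using True xi by (intro mult_left_mono) auto
            then show ?thesis using xi by auto
          qed
          ultimately have "\<bar>f (a + (xs i - a) * x)\<bar> \<le> B" using B(2) by auto
          then have "(1 - x) powr (\<gamma> - 1) * \<bar>f (a + (xs i - a) * x)\<bar> \<le> (1 - x) powr (\<gamma> - 1) * B"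
            by (intro mult_left_mono) auto
          then show ?thesis using True by (simp add: abs_mult mult_ac)
        qed simp
      qed
    qed
  qed
  have cp: "continuous_on {a..b} (\<lambda>u. (u - a) powr \<gamma>)"
    by (rule continuous_on_powr') (use assms(1) in \<open>auto intro: continuous_intros\<close>)
  have "continuous_on {a..b} (\<lambda>u. (1 / Gamma \<gamma>) * ((u-a) powr \<gamma> * I u))"
    by (intro continuous_on_mult continuous_on_const cp contI)
  then show ?thesis by (rule continuous_on_eq) (simp add: eqJ)
qed

lemma J_cont:
  fixes f :: "real \<Rightarrow> real"
  assumes "0 < \<gamma>" "continuous_on {a..b} f"
  shows "continuous_on {a..b} (Jf a \<gamma> f)"
proof (cases "a \<le> b")
  case True
  define fc where "fc = (\<lambda>s. f (max a (min b s)))"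
  have "continuous_on UNIV fc" unfolding fc_def
    by (intro continuous_on_compose2[OF assms(2)] continuous_intros) (use True in auto)
  then have c: "continuous_on {a..b} (Jf a \<gamma> fc)" by (rule J_cont_UNIV[OF assms(1) _ True])
  have "Jf a \<gamma> fc u = Jf a \<gamma> f u" if "u \<in> {a..b}" for u
    using that by (intro J_cong) (auto simp: fc_def)
  then show ?thesis using continuous_on_eq[OF c] by metis
qed simp



lemma J_semigroup_UNIV:
  fixes f :: "real \<Rightarrow> real"
  assumes "0 < \<alpha>" "0 < \<beta>" "continuous_on UNIV f" "a \<le> u"
  shows "Jf a \<alpha> (Jf a \<beta> f) u = Jf a (\<alpha>+\<beta>) f u"
proof -
  have fm[measurable]: "f \<in> borel_measurable borel" using assms(3) by (rule borel_measurable_continuous_onI)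
  have cf: "continuous_on S f" for S using assms(3) by (rule continuous_on_subset) auto
  obtain M where M: "M \<ge> 0" "\<And>x. x \<in> {a..u} \<Longrightarrow> \<bar>f x\<bar> \<le> M"
    using cont_bound[OF cf] by blast
  define G where "G = (\<lambda>s t. if a \<le> t \<and> t \<le> s \<and> s \<le> u then (u-s) powr (\<alpha>-1) * ((s-t) powr (\<beta>-1) * f t) else 0)"
  have Gm: "case_prod G \<in> borel_measurable (lborel \<Otimes>\<^sub>M lborel)"
    unfolding G_def by measurable
  have Gnm: "(\<lambda>(s,t). norm (G s t)) \<in> borel_measurable (lborel \<Otimes>\<^sub>M lborel)"
    using Gm by measurable
  have gpos: "Gamma \<beta> > 0" "Gamma \<alpha> > 0" "Gamma (\<alpha>+\<beta>) > 0" using assms by (auto intro: Gamma_real_pos)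
  have Gs: "(\<lambda>t. G s t) = (\<lambda>t. indicator {a..u} s * (u-s) powr (\<alpha>-1) * (indicator {a..s} t *\<^sub>R ((s-t) powr (\<beta>-1) * f t)))" for s
    by (rule ext) (auto simp: G_def indicator_def)
  have intGs: "(\<integral>t. G s t \<partial>lborel) = indicator {a..u} s *\<^sub>R ((u-s) powr (\<alpha>-1) * (Gamma \<beta> * Jf a \<beta> f s))" for s
    unfolding Gs integral_mult_right_zero using gpos
    by (simp add: Jf_def set_lebesgue_integral_def indicator_def)
  have Gs_int: "integrable lborel (\<lambda>t. G s t)" for s
    unfolding Gs using J_integrable[OF assms(2) cf, of a s] unfolding set_integrable_def
    by (intro integrable_mult_right)
  have Gt: "(\<lambda>s. G s t) = (\<lambda>s. indicator {a..u} t * f t * (indicator {t..u} s *\<^sub>R ((u-s) powr (\<alpha>-1) * (s-t) powr (\<beta>-1))))" for t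
    by (rule ext) (auto simp: G_def indicator_def)
  have intGt: "(\<integral>s. G s t \<partial>lborel) = indicator {a..u} t *\<^sub>R (f t * (Beta \<alpha> \<beta> * (u-t) powr (\<alpha>+\<beta>-1)))" for t
  proof (cases "t \<in> {a..u}")
    case True
    then show ?thesis unfolding Gt integral_mult_right_zero
      using beta_lborel(2)[OF assms(1,2), of t u] True
      by (simp add: set_lebesgue_integral_def)
  next
    case False
    then show ?thesis unfolding Gt by simp
  qed
  have prod_int: "integrable (lborel \<Otimes>\<^sub>M lborel) (case_prod G)"
  proof (rule lborel_pair.Fubini_integrable[OF Gm])
    show "AE x in lborel. integrable lborel (\<lambda>y. case_prod G (x, y))"
      using Gs_int by simp
    define C where "C = Gamma \<beta> * (M * (u-a) powr \<beta> / Gamma (\<beta> + 1))"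
    have absf: "continuous_on S (\<lambda>t. \<bar>f t\<bar>)" for S by (intro continuous_intros cf)
    have nGs: "(\<lambda>t. \<bar>G s t\<bar>) = (\<lambda>t. indicator {a..u} s * (u-s) powr (\<alpha>-1) * (indicator {a..s} t *\<^sub>R ((s-t) powr (\<beta>-1) * \<bar>f t\<bar>)))" for s
      by (rule ext) (auto simp: G_def indicator_def abs_mult)
    have nint: "(\<integral>t. \<bar>G s t\<bar> \<partial>lborel) = indicator {a..u} s *\<^sub>R ((u-s) powr (\<alpha>-1) * (Gamma \<beta> * Jf a \<beta> (\<lambda>t. \<bar>f t\<bar>) s))" for s
      unfolding nGs integral_mult_right_zero using gpos
      by (simp add: Jf_def set_lebesgue_integral_def indicator_def)
    have bnd: "\<bar>Jf a \<beta> (\<lambda>t. \<bar>f t\<bar>) s\<bar> \<le> M * (u-a) powr \<beta> / Gamma (\<beta> + 1)" if "s \<in> {a..u}" for s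
    proof -
      have "\<bar>Jf a \<beta> (\<lambda>t. \<bar>f t\<bar>) s\<bar> \<le> M * (s-a) powr \<beta> / Gamma (\<beta> + 1)"
        by (rule J_bound[OF assms(2) _ set_borel_measurable_cont[OF absf]]) (use that M in auto)
      also have "\<dots> \<le> M * (u-a) powr \<beta> / Gamma (\<beta> + 1)"
        using that M(1) gpos assms(2)
        by (intro divide_right_mono mult_left_mono powr_mono2) (auto intro: Gamma_real_pos)
      finally show ?thesis .
    qed
    have wint: "integrable lborel (\<lambda>s. indicator {a..u} s *\<^sub>R ((u-s) powr (\<alpha>-1) * C))"
      using integrable_mult_left[OF kern_lborel(1)[OF assms(1,4), unfolded set_integrable_def], of C]
      by (simp add: mult_ac)
    show "integrable lborel (\<lambda>x. LINT y|lborel. norm (case_prod G (x, y)))"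
    proof (rule Bochner_Integration.integrable_bound[OF wint])
      show "(\<lambda>x. LINT y|lborel. norm (case_prod G (x, y))) \<in> borel_measurable lborel"
        using lborel.borel_measurable_lebesgue_integral[OF Gnm] by simp
      show "AE x in lborel. norm (LINT y|lborel. norm (case_prod G (x, y))) \<le> norm (indicator {a..u} x *\<^sub>R ((u-x) powr (\<alpha>-1) * C))"
      proof (intro AE_I2)
        fix s
        show "norm (LINT y|lborel. norm (case_prod G (s, y))) \<le> norm (indicator {a..u} s *\<^sub>R ((u-s) powr (\<alpha>-1) * C))"
        proof (cases "s \<in> {a..u}")
          case True
          have "\<bar>(u-s) powr (\<alpha>-1) * (Gamma \<beta> * Jf a \<beta> (\<lambda>t. \<bar>f t\<bar>) s)\<bar> \<le> (u-s) powr (\<alpha>-1) * C"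
          proof -
            have gb: "Gamma \<beta> * \<bar>Jf a \<beta> (\<lambda>t. \<bar>f t\<bar>) s\<bar> \<le> Gamma \<beta> * (M * (u - a) powr \<beta> / Gamma (\<beta> + 1))"
              using gpos bnd[OF True] by (intro mult_left_mono) auto
            have "(u-s) powr (\<alpha>-1) * (Gamma \<beta> * \<bar>Jf a \<beta> (\<lambda>t. \<bar>f t\<bar>) s\<bar>) \<le> (u-s) powr (\<alpha>-1) * C"
              unfolding C_def by (rule mult_left_mono[OF gb]) simp
            then show ?thesis using gpos by (simp add: abs_mult)
          qed
          moreover have "C \<ge> 0" unfolding C_def using gpos M(1) assms(2) by (auto intro!: divide_nonneg_pos Gamma_real_pos)
          ultimately show ?thesis using True by (simp add: nint)
        qed (simp add: nint)
      qed
    qed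
  qed
  have fub: "(\<integral>t. (\<integral>s. G s t \<partial>lborel) \<partial>lborel) = (\<integral>s. (\<integral>t. G s t \<partial>lborel) \<partial>lborel)"
    by (rule lborel_pair.Fubini_integral[OF prod_int])
  have lhs: "(\<integral>s. (\<integral>t. G s t \<partial>lborel) \<partial>lborel) = Gamma \<beta> * Gamma \<alpha> * Jf a \<alpha> (Jf a \<beta> f) u"
  proof -
    have "(\<lambda>s. indicator {a..u} s *\<^sub>R ((u-s) powr (\<alpha>-1) * (Gamma \<beta> * Jf a \<beta> f s))) =
        (\<lambda>s. Gamma \<beta> * (indicator {a..u} s *\<^sub>R ((u-s) powr (\<alpha>-1) * Jf a \<beta> f s)))"
      by (rule ext) (simp add: mult_ac)
    then have "(\<integral>s. (\<integral>t. G s t \<partial>lborel) \<partial>lborel) = Gamma \<beta> * (LINT s:{a..u}|lborel. (u-s) powr (\<alpha>-1) * Jf a \<beta> f s)"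
      unfolding intGs set_lebesgue_integral_def by (simp only: integral_mult_right_zero)
    also have "(LINT s:{a..u}|lborel. (u-s) powr (\<alpha>-1) * Jf a \<beta> f s) = Gamma \<alpha> * Jf a \<alpha> (Jf a \<beta> f) u"
      unfolding Jf_def[of a \<alpha>] using gpos by simp
    finally show ?thesis by (simp add: mult_ac)
  qed
  have rhs: "(\<integral>t. (\<integral>s. G s t \<partial>lborel) \<partial>lborel) = Beta \<alpha> \<beta> * Gamma (\<alpha>+\<beta>) * Jf a (\<alpha>+\<beta>) f u"
  proof -
    have "(\<lambda>t. indicator {a..u} t *\<^sub>R (f t * (Beta \<alpha> \<beta> * (u-t) powr (\<alpha>+\<beta>-1)))) =
        (\<lambda>t. Beta \<alpha> \<beta> * (indicator {a..u} t *\<^sub>R ((u-t) powr (\<alpha>+\<beta>-1) * f t)))"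
      by (rule ext) (simp add: mult_ac)
    then have "(\<integral>t. (\<integral>s. G s t \<partial>lborel) \<partial>lborel) = Beta \<alpha> \<beta> * (LINT t:{a..u}|lborel. (u-t) powr (\<alpha>+\<beta>-1) * f t)"
      unfolding intGt set_lebesgue_integral_def by (simp only: integral_mult_right_zero)
    also have "(LINT t:{a..u}|lborel. (u-t) powr (\<alpha>+\<beta>-1) * f t) = Gamma (\<alpha>+\<beta>) * Jf a (\<alpha>+\<beta>) f u"
      unfolding Jf_def[of a "\<alpha>+\<beta>"] using gpos by simp
    finally show ?thesis by (simp add: mult_ac)
  qed
  have "Beta \<alpha> \<beta> * Gamma (\<alpha>+\<beta>) = Gamma \<alpha> * Gamma \<beta>" using gpos by (simp add: Beta_def)
  then show ?thesis using fub lhs rhs gpos by (simp add: mult_ac)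
qed

lemma clamp_cont:
  fixes f :: "real \<Rightarrow> real"
  assumes "continuous_on {a..b} f" "a \<le> b"
  shows "continuous_on UNIV (\<lambda>s. f (max a (min b s)))"
  by (intro continuous_on_compose2[OF assms(1)] continuous_intros) (use assms(2) in auto)

lemma J_semigroup:
  fixes f :: "real \<Rightarrow> real"
  assumes "0 < \<alpha>" "0 < \<beta>" "continuous_on {a..b} f" "u \<in> {a..b}"
  shows "Jf a \<alpha> (Jf a \<beta> f) u = Jf a (\<alpha>+\<beta>) f u"
proof -
  define fc where "fc = (\<lambda>s. f (max a (min b s)))"
  have ab: "a \<le> b" using assms(4) by auto
  have c: "continuous_on UNIV fc" unfolding fc_def by (rule clamp_cont[OF assms(3) ab])
  have e1: "Jf a \<beta> fc s = Jf a \<beta> f s" if "s \<in> {a..b}" for s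
    using that by (intro J_cong) (auto simp: fc_def)
  have "Jf a \<alpha> (Jf a \<beta> f) u = Jf a \<alpha> (Jf a \<beta> fc) u"
    using assms(4) e1 by (intro J_cong) (auto simp: fc_def)
  also have "\<dots> = Jf a (\<alpha>+\<beta>) fc u"
    using assms(4) by (intro J_semigroup_UNIV[OF assms(1,2) c]) auto
  also have "\<dots> = Jf a (\<alpha>+\<beta>) f u"
    using assms(4) by (intro J_cong) (auto simp: fc_def)
  finally show ?thesis .
qed




lemma Gamma_ratio_lower:
  fixes z \<delta> :: real
  assumes "1 < z" "0 < \<delta>"
  shows "(z-1) powr \<delta> * Gamma z \<le> Gamma (z + \<delta>)"
proof -
  define t where "t = 1 / (1 + \<delta>)"
  have t: "0 \<le> t" "t \<le> 1" using assms by (auto simp: t_def)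
  have t1: "1 - t = \<delta>/(1+\<delta>)" using assms by (simp add: t_def field_simps)
  have "\<delta>/(1+\<delta>)*(z-1) + 1/(1+\<delta>)*(z+\<delta>) = (\<delta>*(z-1) + (z+\<delta>))/(1+\<delta>)"
    by (simp add: add_divide_distrib)
  also have "\<delta>*(z-1) + (z+\<delta>) = z*(1+\<delta>)" by (simp add: algebra_simps)
  also have "z*(1+\<delta>)/(1+\<delta>) = z" using assms by simp
  finally have pt: "(1 - t) *\<^sub>R (z-1) + t *\<^sub>R (z+\<delta>) = z"
    unfolding t1 by (simp add: t_def)
  have c: "(ln \<circ> Gamma) ((1 - t) *\<^sub>R (z-1) + t *\<^sub>R (z+\<delta>)) \<le> (1 - t) * (ln \<circ> Gamma) (z-1) + t * (ln \<circ> Gamma) (z+\<delta>)"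
    by (rule convex_onD[OF log_convex_Gamma_real t]) (use assms in auto)
  have g1: "Gamma z = (z-1) * Gamma (z-1)"
    using Gamma_plus1_real[of "z-1"] assms by simp
  have gp: "Gamma (z-1) > 0" "Gamma z > 0" "Gamma (z+\<delta>) > 0" using assms by (auto intro!: Gamma_real_pos)
  have "ln (Gamma z) = ln (z-1) + ln (Gamma (z-1))"
    unfolding g1 using gp(1) assms by (intro ln_mult_pos) auto
  then have l1: "ln (Gamma (z-1)) = ln (Gamma z) - ln (z-1)" by simp
  have "ln (Gamma z) \<le> (1 - t) * (ln (Gamma z) - ln (z-1)) + t * ln (Gamma (z+\<delta>))"
    using c unfolding pt l1[symmetric] by simp
  then have "(1 + \<delta>) * ln (Gamma z) \<le> (1 + \<delta>) * ((1 - t) * (ln (Gamma z) - ln (z-1)) + t * ln (Gamma (z+\<delta>)))"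
    using assms by (intro mult_left_mono) auto
  also have "\<dots> = ((1 + \<delta>) * (1 - t)) * (ln (Gamma z) - ln (z-1)) + ((1 + \<delta>) * t) * ln (Gamma (z+\<delta>))"
    by (simp add: algebra_simps)
  also have "(1 + \<delta>) * (1 - t) = \<delta>" using assms unfolding t1 by simp
  also have "(1 + \<delta>) * t = 1" using assms unfolding t_def by simp
  finally have "ln (Gamma z) + \<delta> * ln (z-1) \<le> ln (Gamma (z+\<delta>))"
    by (simp add: algebra_simps)
  then have "exp (ln (Gamma z) + \<delta> * ln (z-1)) \<le> exp (ln (Gamma (z+\<delta>)))" by simp
  then show ?thesis using gp assms by (simp add: exp_add powr_def mult.commute)
qed

lemma Mittag_summable_abs:
  fixes \<delta> c x :: real
  assumes "0 < \<delta>" "0 < c"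
  shows "summable (\<lambda>k. \<bar>x\<bar> ^ k / Gamma (\<delta> * real k + c))"
proof -
  define R where "R = max 1 ((2 * \<bar>x\<bar> + 1) powr (1/\<delta>))"
  obtain N :: nat where N: "(R + 1) / \<delta> < real N" using reals_Archimedean2 by blast
  show ?thesis
  proof (rule summable_ratio_test[where c="1/2" and N=N])
    fix n assume n: "N \<le> n"
    define z where "z = \<delta> * real n + c"
    have "(R+1) < \<delta> * real N" using N assms(1) by (simp add: field_simps)
    also have "\<dots> \<le> \<delta> * real n" using n assms(1) by (intro mult_left_mono) auto
    finally have zR: "z - 1 > R" unfolding z_def using assms by simp
    have R1: "R \<ge> 1" unfolding R_def by simp
    then have z1: "z > 1" using zR by simp
    have gz: "Gamma z > 0" "Gamma (z + \<delta>) > 0" using z1 assms by (auto intro!: Gamma_real_pos)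
    have "(z-1) powr \<delta> \<ge> ((2 * \<bar>x\<bar> + 1) powr (1/\<delta>)) powr \<delta>"
      using zR R1 assms(1) unfolding R_def by (intro powr_mono2) auto
    also have "((2 * \<bar>x\<bar> + 1) powr (1/\<delta>)) powr \<delta> = 2 * \<bar>x\<bar> + 1"
      using assms(1) by (simp add: powr_powr)
    finally have zx: "2 * \<bar>x\<bar> \<le> (z-1) powr \<delta>" by simp
    have "2 * \<bar>x\<bar> * Gamma z \<le> (z-1) powr \<delta> * Gamma z"
      using zx gz by (intro mult_right_mono) auto
    also have "\<dots> \<le> Gamma (z + \<delta>)" by (rule Gamma_ratio_lower[OF z1 assms(1)])
    finally have key: "2 * \<bar>x\<bar> * Gamma z \<le> Gamma (z + \<delta>)" .
    have zs: "\<delta> * real (Suc n) + c = z + \<delta>" unfolding z_def by (simp add: algebra_simps)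
    have "\<bar>x\<bar>^n * (2 * \<bar>x\<bar> * Gamma z) \<le> \<bar>x\<bar>^n * Gamma (z + \<delta>)"
      by (rule mult_left_mono[OF key]) simp
    then have "\<bar>x\<bar> ^ Suc n * Gamma z * 2 \<le> \<bar>x\<bar>^n * Gamma (z + \<delta>)" by (simp add: mult_ac)
    then have "\<bar>x\<bar> ^ Suc n / Gamma (z + \<delta>) \<le> 1 / 2 * (\<bar>x\<bar> ^ n / Gamma z)"
      using gz by (simp add: divide_simps mult_ac)
    then show "norm (\<bar>x\<bar> ^ Suc n / Gamma (\<delta> * real (Suc n) + c)) \<le> 1/2 * norm (\<bar>x\<bar> ^ n / Gamma (\<delta> * real n + c))"
      using gz unfolding zs z_def[symmetric] by simp
  qed simp
qed

lemma Mittag_summable: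
  fixes \<delta> c x :: real
  assumes "0 < \<delta>" "0 < c"
  shows "summable (\<lambda>k. x ^ k / Gamma (\<delta> * real k + c))"
proof (rule summable_comparison_test[OF _ Mittag_summable_abs[OF assms, of x]])
  have gp: "Gamma (\<delta> * real n + c) > 0" for n using assms by (intro Gamma_real_pos) (auto intro: add_nonneg_pos)
  show "\<exists>N. \<forall>n\<ge>N. norm (x ^ n / Gamma (\<delta> * real n + c)) \<le> \<bar>x\<bar> ^ n / Gamma (\<delta> * real n + c)"
    by (intro exI[of _ 0] allI impI) (simp add: power_abs abs_of_pos gp)
qed

lemma series_cont:
  fixes F :: "nat \<Rightarrow> real \<Rightarrow> real"
  assumes "\<And>k. continuous_on S (F k)" "\<And>k s. s \<in> S \<Longrightarrow> \<bar>F k s\<bar> \<le> B k" "summable B"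
  shows "continuous_on S (\<lambda>s. \<Sum>k. F k s)"
proof (rule uniform_limit_theorem)
  show "uniform_limit S (\<lambda>n s. \<Sum>k<n. F k s) (\<lambda>s. \<Sum>k. F k s) sequentially"
    by (rule Weierstrass_m_test[OF _ assms(3)]) (use assms(2) in auto)
  show "\<forall>\<^sub>F n in sequentially. continuous_on S (\<lambda>s. \<Sum>k<n. F k s)"
    by (intro always_eventually allI continuous_on_sum assms(1))
qed simp

lemma series_summable_at:
  fixes F :: "nat \<Rightarrow> real \<Rightarrow> real"
  assumes "\<And>k. \<bar>F k s\<bar> \<le> B k" "summable B"
  shows "summable (\<lambda>k. F k s)" "summable (\<lambda>k. \<bar>F k s\<bar>)"
  using summable_comparison_test[of "\<lambda>k. F k s" B] summable_comparison_test[of "\<lambda>k. \<bar>F k s\<bar>" B] assms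
  by auto

lemma J_series:
  fixes F :: "nat \<Rightarrow> real \<Rightarrow> real"
  assumes "0 < \<gamma>" "\<And>k. continuous_on {a..b} (F k)" "\<And>k s. s \<in> {a..b} \<Longrightarrow> \<bar>F k s\<bar> \<le> B k"
    "summable B" "u \<in> {a..b}"
  shows "Jf a \<gamma> (\<lambda>s. \<Sum>k. F k s) u = (\<Sum>k. Jf a \<gamma> (F k) u)"
    and "summable (\<lambda>k. Jf a \<gamma> (F k) u)"
proof -
  have au: "a \<le> u" "{a..u} \<subseteq> {a..b}" using assms(5) by auto
  have cF: "continuous_on {a..u} (F k)" for k using assms(2) au(2) by (rule continuous_on_subset)
  define f where "f = (\<lambda>i s. indicator {a..u} s *\<^sub>R ((u-s) powr (\<gamma>-1) * F i s))"
  have fi: "integrable lborel (f i)" for i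
    using J_integrable[OF assms(1) cF] unfolding f_def set_integrable_def .
  have gp: "Gamma \<gamma> > 0" "Gamma (\<gamma>+1) > 0" using assms(1) by (auto intro!: Gamma_real_pos)
  have B0: "B k \<ge> 0" for k using assms(3)[of a k] au by force
  have nf: "norm (f i s) = indicator {a..u} s *\<^sub>R ((u-s) powr (\<gamma>-1) * \<bar>F i s\<bar>)" for i s
    by (simp add: f_def abs_mult indicator_def)
  have sum_pt: "summable (\<lambda>i. norm (f i s))" for s
  proof -
    have "summable (\<lambda>i. \<bar>F i s\<bar>)" if "s \<in> {a..u}"
      using series_summable_at(2)[of F s B] assms(3,4) au that by auto
    then have "summable (\<lambda>i. indicator {a..u} s *\<^sub>R ((u-s) powr (\<gamma>-1) * \<bar>F i s\<bar>))"
      by (cases "s \<in> {a..u}") (auto intro!: summable_mult)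
    then show ?thesis unfolding nf .
  qed
  have absc: "continuous_on {a..u} (\<lambda>s. \<bar>F i s\<bar>)" for i by (intro continuous_intros cF)
  have int_norm: "(\<integral>s. norm (f i s) \<partial>lborel) \<le> B i * (u-a) powr \<gamma> / Gamma (\<gamma>+1) * Gamma \<gamma>" for i
  proof -
    have "(\<integral>s. norm (f i s) \<partial>lborel) = Gamma \<gamma> * Jf a \<gamma> (\<lambda>s. \<bar>F i s\<bar>) u"
      using gp unfolding nf Jf_def set_lebesgue_integral_def by simp
    also have "\<dots> \<le> Gamma \<gamma> * (B i * (u-a) powr \<gamma> / Gamma (\<gamma>+1))"
    proof -
      have "\<bar>Jf a \<gamma> (\<lambda>s. \<bar>F i s\<bar>) u\<bar> \<le> B i * (u-a) powr \<gamma> / Gamma (\<gamma>+1)"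
        by (rule J_bound[OF assms(1) au(1) set_borel_measurable_cont[OF absc[of i]]]) (use assms(3) au in auto)
      then show ?thesis using gp by (intro mult_left_mono) auto
    qed
    finally show ?thesis by (simp add: mult_ac)
  qed
  have sum_int: "summable (\<lambda>i. \<integral>s. norm (f i s) \<partial>lborel)"
  proof (rule summable_comparison_test[OF _ summable_mult2[OF assms(4)]])
    show "\<exists>N. \<forall>n\<ge>N. norm (\<integral>s. norm (f n s) \<partial>lborel) \<le> B n * ((u-a) powr \<gamma> / Gamma (\<gamma>+1) * Gamma \<gamma>)"
      using int_norm by (auto simp: mult_ac)
  qed
  have aes: "AE s in lborel. summable (\<lambda>i. norm (f i s))" using sum_pt by simp
  note IS = sums_integral[OF fi aes sum_int] integral_suminf[OF fi aes sum_int] summable_integral[OF fi aes sum_int]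
  have pt: "indicator {a..u} s *\<^sub>R ((u-s) powr (\<gamma>-1) * (\<Sum>k. F k s)) = (\<Sum>i. f i s)" for s
  proof (cases "s \<in> {a..u}")
    case True
    have "summable (\<lambda>k. F k s)" using series_summable_at(1)[of F s B] assms(3,4) au True by auto
    then show ?thesis using True by (simp add: f_def suminf_mult)
  qed (simp add: f_def)
  have "Jf a \<gamma> (\<lambda>s. \<Sum>k. F k s) u = (1 / Gamma \<gamma>) * (\<Sum>i. integral\<^sup>L lborel (f i))"
    unfolding Jf_def set_lebesgue_integral_def pt using IS(2) by simp
  also have "\<dots> = (\<Sum>i. (1 / Gamma \<gamma>) * integral\<^sup>L lborel (f i))"
    using suminf_mult[OF IS(3), of "1 / Gamma \<gamma>"] by simp
  also have "\<dots> = (\<Sum>k. Jf a \<gamma> (F k) u)"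
    unfolding Jf_def f_def set_lebesgue_integral_def by simp
  finally show "Jf a \<gamma> (\<lambda>s. \<Sum>k. F k s) u = (\<Sum>k. Jf a \<gamma> (F k) u)" .
  show "summable (\<lambda>k. Jf a \<gamma> (F k) u)"
    using summable_mult[OF IS(3), of "1 / Gamma \<gamma>"]
    unfolding Jf_def f_def set_lebesgue_integral_def by simp
qed




lemma J_cmult: "Jf a \<gamma> (\<lambda>s. c * f s) u = c * Jf a \<gamma> f u"
proof -
  have "(LINT s:{a..u}|lborel. (u-s) powr (\<gamma>-1) * (c * f s)) = c * (LINT s:{a..u}|lborel. (u-s) powr (\<gamma>-1) * f s)"
  proof -
    have "(\<lambda>s. (u-s) powr (\<gamma>-1) * (c * f s)) = (\<lambda>s. c * ((u-s) powr (\<gamma>-1) * f s))"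
      by (simp add: mult_ac)
    then show ?thesis by (simp only: set_integral_mult_right)
  qed
  then show ?thesis unfolding Jf_def by simp
qed

context
  fixes a b :: real and H :: "real \<Rightarrow> real"
  assumes ab: "a < b" and Hc: "continuous_on {a..b} H"
begin

definition JJ :: "real \<Rightarrow> real \<Rightarrow> real" where
  "JJ p = (if p = 0 then H else Jf a p H)"

lemma JJ_cont: "0 \<le> p \<Longrightarrow> continuous_on {a..b} (JJ p)"
proof (cases "p = 0")
  case False
  assume "0 \<le> p"
  then have "0 < p" using False by simp
  then show ?thesis unfolding JJ_def using J_cont[OF _ Hc] False by simp
qed (simp add: JJ_def Hc)

lemma JJ_bound:
  assumes "0 \<le> p" "\<And>s. s \<in> {a..b} \<Longrightarrow> \<bar>H s\<bar> \<le> M" "s \<in> {a..b}"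
  shows "\<bar>JJ p s\<bar> \<le> M * (b-a) powr p / Gamma (p + 1)"
proof (cases "p = 0")
  case True
  then show ?thesis using assms ab by (simp add: JJ_def)
next
  case False
  then have p: "0 < p" using assms(1) by simp
  have c: "continuous_on {a..s} H" using Hc by (rule continuous_on_subset) (use assms(3) in auto)
  have M0: "M \<ge> 0" using assms(2)[of a] ab by force
  have "\<bar>Jf a p H s\<bar> \<le> M * (s-a) powr p / Gamma (p + 1)"
    by (rule J_bound[OF p _ set_borel_measurable_cont[OF c]]) (use assms in auto)
  also have "\<dots> \<le> M * (b-a) powr p / Gamma (p + 1)"
  proof -
    have "(s-a) powr p \<le> (b-a) powr p" using assms(3) p by (intro powr_mono2) auto
    then have "M * (s-a) powr p \<le> M * (b-a) powr p" using M0 by (rule mult_left_mono)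
    moreover have "Gamma (p+1) > 0" using p by (intro Gamma_real_pos) simp
    ultimately show ?thesis by (simp add: divide_right_mono)
  qed
  finally show ?thesis using False by (simp add: JJ_def)
qed

lemma JJ_semi:
  assumes "0 \<le> p" "0 < q" "u \<in> {a..b}"
  shows "Jf a q (JJ p) u = JJ (p + q) u"
proof (cases "p = 0")
  case True
  then show ?thesis using assms by (simp add: JJ_def)
next
  case False
  then have p0: "0 < p" using assms by simp
  show ?thesis using J_semigroup[OF assms(2) p0 Hc assms(3)] assms False
    by (simp add: JJ_def add.commute)
qed

end

context
  fixes a b :: real and H :: "real \<Rightarrow> real" and \<kappa> \<mu> \<rho> M :: real
  assumes ab: "a < b" and Hc: "continuous_on {a..b} H"
    and \<kappa>: "0 < \<kappa>" "\<kappa> < \<mu>" "\<mu> \<le> 1" and \<rho>: "0 < \<rho>"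
    and M: "\<And>s. s \<in> {a..b} \<Longrightarrow> \<bar>H s\<bar> \<le> M"
begin

abbreviation "\<delta> \<equiv> \<mu> - \<kappa>"

lemma \<delta>_pos: "0 < \<delta>" using \<kappa> by simp

definition "Bc c0 k = M * (b-a) powr c0 * (\<rho> * (b-a) powr \<delta>) ^ k / Gamma (\<delta> * real k + (c0 + 1))"

lemma Bc_summable: "0 \<le> c0 \<Longrightarrow> summable (Bc c0)"
  unfolding Bc_def using summable_mult[OF Mittag_summable[OF \<delta>_pos, of "c0+1" "\<rho> * (b-a) powr \<delta>"], of "M * (b-a) powr c0"]
  by (simp add: mult_ac)

lemma ser_bound:
  assumes "0 \<le> c0" "s \<in> {a..b}"
  shows "\<bar>(-\<rho>)^k * JJ a H (\<delta> * real k + c0) s\<bar> \<le> Bc c0 k"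
proof -
  have p: "0 \<le> \<delta> * real k + c0" using assms \<delta>_pos by simp
  have "\<bar>JJ a H (\<delta> * real k + c0) s\<bar> \<le> M * (b-a) powr (\<delta> * real k + c0) / Gamma (\<delta> * real k + c0 + 1)"
    by (rule JJ_bound[OF ab Hc p M assms(2)])
  also have "(b-a) powr (\<delta> * real k + c0) = (b-a) powr c0 * ((b-a) powr \<delta>) ^ k"
  proof -
    have "(b-a) powr (\<delta> * real k) = ((b-a) powr \<delta>) powr (real k)" by (simp add: powr_powr)
    also have "\<dots> = ((b-a) powr \<delta>) ^ k" using ab by (simp add: powr_realpow)
    finally show ?thesis by (simp add: powr_add mult.commute)
  qed
  finally have "\<bar>JJ a H (\<delta> * real k + c0) s\<bar> \<le> M * ((b-a) powr c0 * ((b-a) powr \<delta>) ^ k) / Gamma (\<delta> * real k + c0 + 1)" .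
  then have "\<rho>^k * \<bar>JJ a H (\<delta> * real k + c0) s\<bar> \<le> \<rho>^k * (M * ((b-a) powr c0 * ((b-a) powr \<delta>) ^ k) / Gamma (\<delta> * real k + c0 + 1))"
    using \<rho> by (intro mult_left_mono) auto
  then show ?thesis unfolding Bc_def by (simp add: abs_mult power_abs power_mult_distrib mult_ac add_ac abs_of_pos[OF \<rho>])
qed

lemma ser_cont: "0 \<le> c0 \<Longrightarrow> continuous_on {a..b} (\<lambda>s. \<Sum>k. (-\<rho>)^k * JJ a H (\<delta> * real k + c0) s)"
  by (rule series_cont[OF _ ser_bound Bc_summable]) (use JJ_cont[OF ab Hc] \<delta>_pos in \<open>auto intro!: continuous_intros\<close>)

lemma J_ser:
  assumes "0 \<le> c0" "0 < q" "u \<in> {a..b}"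
  shows "Jf a q (\<lambda>s. \<Sum>k. (-\<rho>)^k * JJ a H (\<delta> * real k + c0) s) u = (\<Sum>k. (-\<rho>)^k * JJ a H (\<delta> * real k + c0 + q) u)"
proof -
  have c: "continuous_on {a..b} (\<lambda>s. (-\<rho>)^k * JJ a H (\<delta> * real k + c0) s)" for k
    using JJ_cont[OF ab Hc, of "\<delta> * real k + c0"] \<delta>_pos assms by (auto intro!: continuous_intros)
  have "Jf a q (\<lambda>s. \<Sum>k. (-\<rho>)^k * JJ a H (\<delta> * real k + c0) s) u = (\<Sum>k. Jf a q (\<lambda>s. (-\<rho>)^k * JJ a H (\<delta> * real k + c0) s) u)"
    by (rule J_series(1)[OF assms(2) c ser_bound[OF assms(1)] Bc_summable[OF assms(1)] assms(3)])
  also have "\<dots> = (\<Sum>k. (-\<rho>)^k * JJ a H (\<delta> * real k + c0 + q) u)"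
    using assms \<delta>_pos by (simp add: J_cmult JJ_semi[OF ab Hc])
  finally show ?thesis .
qed

definition "Zs = (\<lambda>u. \<Sum>k. (-\<rho>)^k * JJ a H (\<delta> * real k + \<mu>) u)"
definition "G1 = (\<lambda>u. \<Sum>k. (-\<rho>)^k * JJ a H (\<delta> * real k + 0) u)"
definition "G2 = (\<lambda>u. \<Sum>k. (-\<rho>)^k * JJ a H (\<delta> * real k + \<delta>) u)"

lemma Zs_cont: "continuous_on {a..b} Zs" unfolding Zs_def using ser_cont \<kappa> by simp
lemma G1_cont: "continuous_on {a..b} G1" unfolding G1_def using ser_cont[of 0] by simp
lemma G2_cont: "continuous_on {a..b} G2" unfolding G2_def using ser_cont \<delta>_pos by simp

lemma Zs_a: "Zs a = 0"
proof -
  have "JJ a H (\<delta> * real k + \<mu>) a = 0" for k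
  proof -
    have "0 < \<delta> * real k + \<mu>" using \<delta>_pos \<kappa> by (intro add_nonneg_pos) auto
    then show ?thesis unfolding JJ_def[OF ab Hc] by (simp add: J_at_a)
  qed
  then show ?thesis unfolding Zs_def by simp
qed

lemma T_mu:
  assumes "u \<in> {a..b}"
  shows "(if \<mu> = 1 then Zs u else Jf a (1-\<mu>) Zs u) = Jf a 1 G1 u"
proof -
  have g1: "Jf a 1 G1 u = (\<Sum>k. (-\<rho>)^k * JJ a H (\<delta> * real k + 0 + 1) u)"
    unfolding G1_def by (rule J_ser[OF _ _ assms]) auto
  show ?thesis
  proof (cases "\<mu> = 1")
    case True
    then show ?thesis unfolding g1 Zs_def by simp
  next
    case False
    then have q: "0 < 1 - \<mu>" using \<kappa> by simp
    have X: "Jf a (1-\<mu>) Zs u = (\<Sum>k. (-\<rho>)^k * JJ a H (\<delta> * real k + \<mu> + (1-\<mu>)) u)"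
      unfolding Zs_def by (rule J_ser[OF _ q assms]) (use \<kappa> in auto)
    have e: "\<And>k. \<delta> * real k + \<mu> + (1-\<mu>) = \<delta> * real k + 0 + 1" by simp
    have Y: "(\<Sum>k. (-\<rho>)^k * JJ a H (\<delta> * real k + \<mu> + (1-\<mu>)) u) = (\<Sum>k. (-\<rho>)^k * JJ a H (\<delta> * real k + 0 + 1) u)"
      by (simp only: e)
    show ?thesis using False g1 X Y by simp
  qed
qed

lemma T_kappa:
  assumes "u \<in> {a..b}"
  shows "Jf a (1-\<kappa>) Zs u = Jf a 1 G2 u"
proof -
  have g2: "Jf a 1 G2 u = (\<Sum>k. (-\<rho>)^k * JJ a H (\<delta> * real k + \<delta> + 1) u)"
    unfolding G2_def by (rule J_ser[OF _ _ assms]) (use \<delta>_pos in auto)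
  have q: "0 < 1 - \<kappa>" using \<kappa> by simp
  have X: "Jf a (1-\<kappa>) Zs u = (\<Sum>k. (-\<rho>)^k * JJ a H (\<delta> * real k + \<mu> + (1-\<kappa>)) u)"
    unfolding Zs_def by (rule J_ser[OF _ q assms]) (use \<kappa> in auto)
  have e: "\<And>k. \<delta> * real k + \<mu> + (1-\<kappa>) = \<delta> * real k + \<delta> + 1" by simp
  have Y: "(\<Sum>k. (-\<rho>)^k * JJ a H (\<delta> * real k + \<mu> + (1-\<kappa>)) u) = (\<Sum>k. (-\<rho>)^k * JJ a H (\<delta> * real k + \<delta> + 1) u)"
    by (simp only: e)
  show ?thesis using g2 X Y by simp
qed

lemma G_sum:
  assumes "s \<in> {a..b}"
  shows "G1 s + \<rho> * G2 s = H s"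
proof -
  define f where "f = (\<lambda>k. (-\<rho>)^k * JJ a H (\<delta> * real k + 0) s)"
  have sf: "summable f" unfolding f_def
    by (rule series_summable_at(1)[of "\<lambda>k s. (-\<rho>)^k * JJ a H (\<delta> * real k + 0) s" s "Bc 0", OF ser_bound[OF _ assms] Bc_summable]) auto
  have s2: "summable (\<lambda>k. (-\<rho>)^k * JJ a H (\<delta> * real k + \<delta>) s)"
    by (rule series_summable_at(1)[of "\<lambda>k s. (-\<rho>)^k * JJ a H (\<delta> * real k + \<delta>) s" s "Bc \<delta>", OF ser_bound[OF _ assms] Bc_summable]) (use \<delta>_pos in auto)
  have f0: "f 0 = H s" unfolding f_def by (simp add: JJ_def[OF ab Hc])
  have fS: "f (Suc k) = (-\<rho>) * ((-\<rho>)^k * JJ a H (\<delta> * real k + \<delta>) s)" for k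
    unfolding f_def by (simp add: algebra_simps)
  have "(\<Sum>k. f (Suc k)) = suminf f - f 0" by (rule suminf_split_head[OF sf])
  moreover have "(\<Sum>k. f (Suc k)) = (-\<rho>) * G2 s"
    unfolding fS G2_def by (rule suminf_mult[OF s2])
  moreover have "G1 s = suminf f" unfolding G1_def f_def by simp
  ultimately show ?thesis using f0 by simp
qed

lemma kernel_eq:
  assumes v: "v \<in> {a..b}"
  shows "(LINT s:{a..v}|lborel. (v-s) powr (\<mu>-1) * (\<Sum>k. (- \<rho> * (v-s) powr \<delta>)^k / Gamma (\<delta> * real k + \<mu>)) * H s) = Zs v"
    and "set_integrable lborel {a..v} (\<lambda>s. (v-s) powr (\<mu>-1) * (\<Sum>k. (- \<rho> * (v-s) powr \<delta>)^k / Gamma (\<delta> * real k + \<mu>)) * H s)"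
proof -
  have av: "a \<le> v" "{a..v} \<subseteq> {a..b}" using v by auto
  have cH: "continuous_on {a..v} H" using Hc av(2) by (rule continuous_on_subset)
  have cH': "continuous_on {a..v} (\<lambda>s. \<bar>H s\<bar>)" by (intro continuous_intros cH)
  have pp: "0 < \<delta> * real k + \<mu>" for k using \<delta>_pos \<kappa> by (intro add_nonneg_pos) auto
  have gp: "Gamma (\<delta> * real k + \<mu>) > 0" for k using pp by (rule Gamma_real_pos)
  have M0: "M \<ge> 0" using M[of a] ab by force
  define f where "f = (\<lambda>k s. indicator {a..v} s *\<^sub>R ((-\<rho>)^k / Gamma (\<delta> * real k + \<mu>) * ((v-s) powr (\<delta> * real k + \<mu> - 1) * H s)))"
  have fi: "integrable lborel (f k)" for k
  proof -
    have "integrable lborel (\<lambda>s. (-\<rho>)^k / Gamma (\<delta> * real k + \<mu>) * (indicator {a..v} s *\<^sub>R ((v-s) powr (\<delta> * real k + \<mu> - 1) * H s)))"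
      using J_integrable[OF pp cH, of k] unfolding set_integrable_def by (intro integrable_mult_right)
    then show ?thesis unfolding f_def by (simp add: mult_ac)
  qed
  have nf: "norm (f k s) = indicator {a..v} s *\<^sub>R (\<rho>^k / Gamma (\<delta> * real k + \<mu>) * ((v-s) powr (\<delta> * real k + \<mu> - 1) * \<bar>H s\<bar>))" for k s
    using gp[of k] \<rho> by (simp add: f_def abs_mult power_abs indicator_def)
  have sum_pt: "summable (\<lambda>k. norm (f k s))" for s
  proof (cases "s \<in> {a..v} \<and> s < v")
    case True
    define x where "x = v - s"
    have x: "0 < x" using True by (simp add: x_def)
    have e: "\<rho>^k / Gamma (\<delta> * real k + \<mu>) * (x powr (\<delta> * real k + \<mu> - 1) * \<bar>H s\<bar>) =
        (x powr (\<mu> - 1) * \<bar>H s\<bar>) * ((\<rho> * x powr \<delta>)^k / Gamma (\<delta> * real k + \<mu>))" for k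
    proof -
      have "x powr (\<delta> * real k + \<mu> - 1) = x powr (\<mu> - 1) * (x powr \<delta>)^k"
      proof -
        have "x powr (\<delta> * real k) = (x powr \<delta>) powr (real k)" by (simp add: powr_powr)
        also have "\<dots> = (x powr \<delta>) ^ k" using x by (simp add: powr_realpow)
        finally have h: "x powr (\<delta> * real k) = (x powr \<delta>) ^ k" .
        have "x powr (\<delta> * real k + \<mu> - 1) = x powr ((\<mu> - 1) + \<delta> * real k)" by (simp add: algebra_simps)
        also have "\<dots> = x powr (\<mu> - 1) * x powr (\<delta> * real k)" by (rule powr_add)
        finally show ?thesis using h by simp
      qed
      then show ?thesis by (simp add: power_mult_distrib field_simps)
    qed
    have sm: "summable (\<lambda>k. (x powr (\<mu> - 1) * \<bar>H s\<bar>) * ((\<rho> * x powr \<delta>)^k / Gamma (\<delta> * real k + \<mu>)))"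
      using Mittag_summable[OF \<delta>_pos, of \<mu> "\<rho> * x powr \<delta>"] \<kappa> by (intro summable_mult) auto
    have n1: "norm (f k s) = \<rho>^k / Gamma (\<delta> * real k + \<mu>) * (x powr (\<delta> * real k + \<mu> - 1) * \<bar>H s\<bar>)" for k
      using True unfolding nf x_def by (simp add: indicator_def)
    have "(\<lambda>k. norm (f k s)) = (\<lambda>k. (x powr (\<mu> - 1) * \<bar>H s\<bar>) * ((\<rho> * x powr \<delta>)^k / Gamma (\<delta> * real k + \<mu>)))"
      by (rule ext) (simp only: n1 e)
    then show ?thesis using sm by simp
  next
    case False
    then have "f k s = 0" for k
      by (cases "s = v") (auto simp: f_def indicator_def)
    then show ?thesis by simp
  qed
  have aes: "AE s in lborel. summable (\<lambda>k. norm (f k s))" using sum_pt by simp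
  have int_norm: "(\<integral>s. norm (f k s) \<partial>lborel) \<le> Bc \<mu> k" for k
  proof -
    have "(\<integral>s. norm (f k s) \<partial>lborel) = \<rho>^k * Jf a (\<delta> * real k + \<mu>) (\<lambda>s. \<bar>H s\<bar>) v"
      using gp[of k] unfolding nf Jf_def set_lebesgue_integral_def
      by (simp add: integral_mult_right_zero[symmetric] mult_ac)
    also have "\<dots> \<le> \<rho>^k * (M * (v-a) powr (\<delta> * real k + \<mu>) / Gamma (\<delta> * real k + \<mu> + 1))"
    proof -
      have "\<bar>Jf a (\<delta> * real k + \<mu>) (\<lambda>s. \<bar>H s\<bar>) v\<bar> \<le> M * (v-a) powr (\<delta> * real k + \<mu>) / Gamma (\<delta> * real k + \<mu> + 1)"
        by (rule J_bound[OF pp av(1) set_borel_measurable_cont[OF cH']]) (use M av in auto)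
      then show ?thesis using \<rho> by (intro mult_left_mono) auto
    qed
    also have "\<dots> \<le> \<rho>^k * (M * (b-a) powr (\<delta> * real k + \<mu>) / Gamma (\<delta> * real k + \<mu> + 1))"
    proof -
      have "(v-a) powr (\<delta> * real k + \<mu>) \<le> (b-a) powr (\<delta> * real k + \<mu>)"
        using v pp[of k] by (intro powr_mono2) auto
      then have "M * (v-a) powr (\<delta> * real k + \<mu>) \<le> M * (b-a) powr (\<delta> * real k + \<mu>)" using M0 by (rule mult_left_mono)
      moreover have "Gamma (\<delta> * real k + \<mu> + 1) > 0" using pp[of k] by (intro Gamma_real_pos) simp
      ultimately show ?thesis using \<rho> by (intro mult_left_mono) (auto simp: divide_right_mono)
    qed
    also have "\<dots> = Bc \<mu> k"
    proof -
      have "(b-a) powr (\<delta> * real k) = ((b-a) powr \<delta>) powr (real k)" by (simp add: powr_powr)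
      also have "\<dots> = ((b-a) powr \<delta>) ^ k" using ab by (simp add: powr_realpow)
      finally have "(b-a) powr (\<delta> * real k + \<mu>) = (b-a) powr \<mu> * ((b-a) powr \<delta>) ^ k"
        by (simp add: powr_add mult.commute)
      then show ?thesis unfolding Bc_def by (simp add: power_mult_distrib mult_ac add_ac)
    qed
    finally show ?thesis .
  qed
  have sum_int: "summable (\<lambda>k. \<integral>s. norm (f k s) \<partial>lborel)"
    by (rule summable_comparison_test[OF _ Bc_summable[of \<mu>]]) (use int_norm \<kappa> in auto)
  note IS = integral_suminf[OF fi aes sum_int]
  have pt: "indicator {a..v} s *\<^sub>R ((v-s) powr (\<mu>-1) * (\<Sum>k. (- \<rho> * (v-s) powr \<delta>)^k / Gamma (\<delta> * real k + \<mu>)) * H s) = (\<Sum>k. f k s)" for s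
  proof (cases "s \<in> {a..v} \<and> s < v")
    case True
    define x where "x = v - s"
    have x: "0 < x" using True by (simp add: x_def)
    have e: "(-\<rho>)^k / Gamma (\<delta> * real k + \<mu>) * (x powr (\<delta> * real k + \<mu> - 1) * H s) =
        (x powr (\<mu> - 1) * H s) * ((- \<rho> * x powr \<delta>)^k / Gamma (\<delta> * real k + \<mu>))" for k
    proof -
      have "x powr (\<delta> * real k + \<mu> - 1) = x powr (\<mu> - 1) * (x powr \<delta>)^k"
      proof -
        have "x powr (\<delta> * real k) = (x powr \<delta>) powr (real k)" by (simp add: powr_powr)
        also have "\<dots> = (x powr \<delta>) ^ k" using x by (simp add: powr_realpow)
        finally have h: "x powr (\<delta> * real k) = (x powr \<delta>) ^ k" .
        have "x powr (\<delta> * real k + \<mu> - 1) = x powr ((\<mu> - 1) + \<delta> * real k)" by (simp add: algebra_simps)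
        also have "\<dots> = x powr (\<mu> - 1) * x powr (\<delta> * real k)" by (rule powr_add)
        finally show ?thesis using h by simp
      qed
      moreover have "(- \<rho> * x powr \<delta>)^k = (-\<rho>)^k * (x powr \<delta>)^k" by (rule power_mult_distrib)
      ultimately show ?thesis using gp[of k] by (simp add: field_simps)
    qed
    have sm: "summable (\<lambda>k. (- \<rho> * x powr \<delta>)^k / Gamma (\<delta> * real k + \<mu>))"
      using Mittag_summable[OF \<delta>_pos, of \<mu>] \<kappa> by auto
    have f1: "f k s = (-\<rho>)^k / Gamma (\<delta> * real k + \<mu>) * (x powr (\<delta> * real k + \<mu> - 1) * H s)" for k
      using True unfolding f_def x_def by (simp add: indicator_def)
    have "(\<Sum>k. f k s) = (\<Sum>k. (x powr (\<mu> - 1) * H s) * ((- \<rho> * x powr \<delta>)^k / Gamma (\<delta> * real k + \<mu>)))"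
      by (simp only: f1 e)
    also have "\<dots> = (x powr (\<mu> - 1) * H s) * (\<Sum>k. (- \<rho> * x powr \<delta>)^k / Gamma (\<delta> * real k + \<mu>))"
      by (rule suminf_mult[OF sm])
    finally show ?thesis using True by (simp add: x_def mult_ac)
  next
    case False
    then have "f k s = 0" for k by (cases "s = v") (auto simp: f_def indicator_def)
    then show ?thesis using False by (cases "s = v") (auto simp: indicator_def)
  qed
  show "set_integrable lborel {a..v} (\<lambda>s. (v-s) powr (\<mu>-1) * (\<Sum>k. (- \<rho> * (v-s) powr \<delta>)^k / Gamma (\<delta> * real k + \<mu>)) * H s)"
    unfolding set_integrable_def pt using integrable_suminf[OF fi aes sum_int] .
  have "(LINT s:{a..v}|lborel. (v-s) powr (\<mu>-1) * (\<Sum>k. (- \<rho> * (v-s) powr \<delta>)^k / Gamma (\<delta> * real k + \<mu>)) * H s)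
      = (\<Sum>k. integral\<^sup>L lborel (f k))"
    unfolding set_lebesgue_integral_def pt using IS by simp
  moreover have ik: "integral\<^sup>L lborel (f k) = (-\<rho>)^k * JJ a H (\<delta> * real k + \<mu>) v" for k
  proof -
    have "(\<lambda>s. f k s) = (\<lambda>s. (-\<rho>)^k / Gamma (\<delta> * real k + \<mu>) * (indicator {a..v} s *\<^sub>R ((v-s) powr (\<delta> * real k + \<mu> - 1) * H s)))"
      by (rule ext) (simp add: f_def)
    then have "integral\<^sup>L lborel (f k) = (-\<rho>)^k / Gamma (\<delta> * real k + \<mu>) * (LINT s:{a..v}|lborel. (v-s) powr (\<delta> * real k + \<mu> - 1) * H s)"
      unfolding set_lebesgue_integral_def by (simp only: integral_mult_right_zero)
    then show ?thesis using pp[of k] unfolding JJ_def[OF ab Hc] Jf_def by simp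
  qed
  ultimately show "(LINT s:{a..v}|lborel. (v-s) powr (\<mu>-1) * (\<Sum>k. (- \<rho> * (v-s) powr \<delta>)^k / Gamma (\<delta> * real k + \<mu>)) * H s) = Zs v"
    unfolding Zs_def by simp
qed

end


lemma zero_from_J1:
  fixes F :: "real \<Rightarrow> real"
  assumes "a < b" "continuous_on {a..b} F" "\<And>u. u \<in> {a..b} \<Longrightarrow> Jf a 1 F u = 0" "u \<in> {a..b}"
  shows "F u = 0"
proof -
  have d1: "((\<lambda>v. Jf a 1 F v) has_vector_derivative F u) (at u within {a..b})"
    by (rule J_one_deriv[OF assms(2,4)])
  have d2: "((\<lambda>v. 0) has_vector_derivative F u) (at u within {a..b})"
    by (rule has_vector_derivative_transform_within[OF d1 zero_less_one assms(4)]) (use assms(3) in auto)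
  have d3: "((\<lambda>v. 0::real) has_vector_derivative 0) (at u within {a..b})" by simp
  show ?thesis
    using vector_derivative_within_closed_interval[OF assms(1,4) d2]
          vector_derivative_within_closed_interval[OF assms(1,4) d3] by simp
qed

lemma volterra_unique:
  fixes D :: "real \<Rightarrow> real"
  assumes ab: "a < b" and Dc: "continuous_on {a..b} D" and Da: "D a = 0"
    and \<kappa>: "0 < \<kappa>" "\<kappa> < \<mu>" "\<mu> \<le> 1" and \<rho>: "0 < \<rho>"
    and eq: "\<And>u. u \<in> {a..b} \<Longrightarrow> (if \<mu> = 1 then D u else Jf a (1-\<mu>) D u) + \<rho> * Jf a (1-\<kappa>) D u = 0"
    and u: "u \<in> {a..b}"
  shows "D u = 0"
proof -
  define \<delta> where "\<delta> = \<mu> - \<kappa>"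
  have \<delta>: "0 < \<delta>" using \<kappa> by (simp add: \<delta>_def)
  define F where "F = (\<lambda>s. D s + \<rho> * Jf a \<delta> D s)"
  have JDc: "continuous_on {a..b} (Jf a g D)" if "0 < g" for g by (rule J_cont[OF that Dc])
  have Fc: "continuous_on {a..b} F" unfolding F_def by (intro continuous_intros JDc \<delta> Dc)
  have F0: "F v = 0" if v: "v \<in> {a..b}" for v
  proof (cases "\<mu> = 1")
    case True
    then show ?thesis using eq[OF v] by (simp add: F_def \<delta>_def)
  next
    case False
    then have m1: "0 < 1 - \<mu>" using \<kappa> by simp
    have k1: "0 < 1 - \<kappa>" using \<kappa> by simp
    have m: "0 < \<mu>" using \<kappa> by simp
    have "Jf a 1 F w = 0" if w: "w \<in> {a..b}" for w
    proof -
      have sub: "{a..w} \<subseteq> {a..b}" using w by auto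
      have c1: "continuous_on {a..w} (Jf a (1-\<mu>) D)" by (rule continuous_on_subset[OF JDc[OF m1] sub])
      have c2: "continuous_on {a..w} (Jf a (1-\<kappa>) D)" by (rule continuous_on_subset[OF JDc[OF k1] sub])
      have "0 = Jf a \<mu> (\<lambda>s. Jf a (1-\<mu>) D s + \<rho> * Jf a (1-\<kappa>) D s) w"
      proof -
        have "Jf a \<mu> (\<lambda>s. Jf a (1-\<mu>) D s + \<rho> * Jf a (1-\<kappa>) D s) w = Jf a \<mu> (\<lambda>s. 0) w"
          by (rule J_cong) (use eq False sub in auto)
        then show ?thesis by (simp add: J_zero)
      qed
      also have "\<dots> = Jf a \<mu> (Jf a (1-\<mu>) D) w + \<rho> * Jf a \<mu> (Jf a (1-\<kappa>) D) w"
        by (rule J_lin[OF m c1 c2])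
      also have "Jf a \<mu> (Jf a (1-\<mu>) D) w = Jf a 1 D w"
        using J_semigroup[OF m m1 Dc w] by simp
      also have "Jf a \<mu> (Jf a (1-\<kappa>) D) w = Jf a 1 (Jf a \<delta> D) w"
      proof -
        have "Jf a \<mu> (Jf a (1-\<kappa>) D) w = Jf a (\<mu> + (1-\<kappa>)) D w" by (rule J_semigroup[OF m k1 Dc w])
        also have "\<dots> = Jf a (1 + \<delta>) D w" by (simp add: \<delta>_def algebra_simps)
        also have "\<dots> = Jf a 1 (Jf a \<delta> D) w" by (rule J_semigroup[OF zero_less_one \<delta> Dc w, symmetric])
        finally show ?thesis .
      qed
      also have "Jf a 1 D w + \<rho> * Jf a 1 (Jf a \<delta> D) w = Jf a 1 F w"
        unfolding F_def
        by (rule J_lin[symmetric, OF zero_less_one continuous_on_subset[OF Dc sub] continuous_on_subset[OF JDc[OF \<delta>] sub]])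
      finally show ?thesis by simp
    qed
    then show ?thesis by (rule zero_from_J1[OF ab Fc _ v])
  qed
  obtain M where M: "M \<ge> 0" "\<And>x. x \<in> {a..b} \<Longrightarrow> \<bar>D x\<bar> \<le> M" using cont_bound[OF Dc] by blast
  have gp: "\<And>x::real. 0 < x \<Longrightarrow> Gamma x > 0" by (rule Gamma_real_pos)
  have bound: "\<forall>v\<in>{a..b}. \<bar>D v\<bar> \<le> M * \<rho>^k * (v-a) powr (\<delta> * real k) / Gamma (\<delta> * real k + 1)" for k
  proof (induction k)
    case 0
    show ?case
    proof
      fix v assume v: "v \<in> {a..b}"
      show "\<bar>D v\<bar> \<le> M * \<rho>^0 * (v-a) powr (\<delta> * real 0) / Gamma (\<delta> * real 0 + 1)"
        using M(2)[OF v] Da by (cases "v = a") auto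
    qed
  next
    case (Suc k)
    show ?case
    proof
      fix v assume v: "v \<in> {a..b}"
      have av: "a \<le> v" "{a..v} \<subseteq> {a..b}" using v by auto
      have cD: "continuous_on {a..v} D" by (rule continuous_on_subset[OF Dc av(2)])
      define C where "C = M * \<rho>^k / Gamma (\<delta> * real k + 1)"
      have gk: "Gamma (\<delta> * real k + 1) > 0" using \<delta> by (intro gp add_nonneg_pos) auto
      have C0: "C \<ge> 0" unfolding C_def using M \<rho> gk by simp
      have pk: "0 < \<delta> * real k + 1" using \<delta> by (intro add_nonneg_pos) auto
      note bl = beta_lborel[OF \<delta> pk av(1)]
      have i1: "set_integrable lborel {a..v} (\<lambda>s. (v-s) powr (\<delta>-1) * D s)" by (rule J_integrable[OF \<delta> cD])
      have i2: "set_integrable lborel {a..v} (\<lambda>s. C * ((v-s) powr (\<delta>-1) * (s-a) powr (\<delta> * real k + 1 - 1)))"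
        using bl(1) \<delta> by (intro set_integrable_mult_right) auto
      have i3: "set_integrable lborel {a..v} (\<lambda>s. - ((v-s) powr (\<delta>-1) * D s))"
        using set_integrable_mult_right[of "-1", OF i1] by simp
      have pw: "\<bar>D s\<bar> \<le> C * (s-a) powr (\<delta> * real k + 1 - 1)" if "s \<in> {a..v}" for s
        using Suc.IH that av by (auto simp: C_def)
      have le1: "(LINT s:{a..v}|lborel. (v-s) powr (\<delta>-1) * D s) \<le> (LINT s:{a..v}|lborel. C * ((v-s) powr (\<delta>-1) * (s-a) powr (\<delta> * real k + 1 - 1)))"
      proof (rule set_integral_mono[OF i1 i2])
        fix s assume s: "s \<in> {a..v}"
        have "(v-s) powr (\<delta>-1) * D s \<le> (v-s) powr (\<delta>-1) * (C * (s-a) powr (\<delta> * real k + 1 - 1))"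
          using pw[OF s] by (intro mult_left_mono) auto
        then show "(v-s) powr (\<delta>-1) * D s \<le> C * ((v-s) powr (\<delta>-1) * (s-a) powr (\<delta> * real k + 1 - 1))"
          by (simp add: mult_ac)
      qed
      have le2: "(LINT s:{a..v}|lborel. - ((v-s) powr (\<delta>-1) * D s)) \<le> (LINT s:{a..v}|lborel. C * ((v-s) powr (\<delta>-1) * (s-a) powr (\<delta> * real k + 1 - 1)))"
      proof (rule set_integral_mono[OF i3 i2])
        fix s assume s: "s \<in> {a..v}"
        have "(v-s) powr (\<delta>-1) * (- D s) \<le> (v-s) powr (\<delta>-1) * (C * (s-a) powr (\<delta> * real k + 1 - 1))"
          using pw[OF s] by (intro mult_left_mono) auto
        then show "- ((v-s) powr (\<delta>-1) * D s) \<le> C * ((v-s) powr (\<delta>-1) * (s-a) powr (\<delta> * real k + 1 - 1))"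
          by (simp add: mult_ac)
      qed
      have neg: "(LINT s:{a..v}|lborel. - ((v-s) powr (\<delta>-1) * D s)) = - (LINT s:{a..v}|lborel. (v-s) powr (\<delta>-1) * D s)"
        using set_integral_mult_right[where a="-1" and A="{a..v}" and M=lborel] by simp
      have val: "(LINT s:{a..v}|lborel. C * ((v-s) powr (\<delta>-1) * (s-a) powr (\<delta> * real k + 1 - 1))) =
          C * (Beta \<delta> (\<delta> * real k + 1) * (v-a) powr (\<delta> + (\<delta> * real k + 1) - 1))"
        using bl(2) \<delta> by (simp add: set_integral_mult_right)
      have absI: "\<bar>LINT s:{a..v}|lborel. (v-s) powr (\<delta>-1) * D s\<bar> \<le> C * (Beta \<delta> (\<delta> * real k + 1) * (v-a) powr (\<delta> + (\<delta> * real k + 1) - 1))"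
        using le1 le2 neg val by linarith
      have Dv: "D v = - \<rho> * Jf a \<delta> D v" using F0[OF v] by (simp add: F_def)
      have "\<bar>D v\<bar> = \<rho> / Gamma \<delta> * \<bar>LINT s:{a..v}|lborel. (v-s) powr (\<delta>-1) * D s\<bar>"
        unfolding Dv Jf_def using \<rho> gp[OF \<delta>] by (simp add: abs_mult)
      also have "\<dots> \<le> \<rho> / Gamma \<delta> * (C * (Beta \<delta> (\<delta> * real k + 1) * (v-a) powr (\<delta> + (\<delta> * real k + 1) - 1)))"
        using absI \<rho> gp[OF \<delta>] by (intro mult_left_mono) auto
      also have "\<dots> = M * \<rho>^Suc k * (v-a) powr (\<delta> * real (Suc k)) / Gamma (\<delta> * real (Suc k) + 1)"
      proof -
        have g1: "Gamma \<delta> > 0" "Gamma (\<delta> * real k + 1) > 0" "Gamma (\<delta> * real (Suc k) + 1) > 0"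
          using \<delta> by (auto intro!: gp add_nonneg_pos)
        have "Beta \<delta> (\<delta> * real k + 1) = Gamma \<delta> * Gamma (\<delta> * real k + 1) / Gamma (\<delta> * real (Suc k) + 1)"
          unfolding Beta_def by (simp add: algebra_simps)
        moreover have "\<delta> + (\<delta> * real k + 1) - 1 = \<delta> * real (Suc k)" by (simp add: algebra_simps)
        ultimately show ?thesis using g1 unfolding C_def by (simp add: field_simps)
      qed
      finally show "\<bar>D v\<bar> \<le> M * \<rho>^Suc k * (v-a) powr (\<delta> * real (Suc k)) / Gamma (\<delta> * real (Suc k) + 1)" .
    qed
  qed
  define x where "x = \<rho> * (b-a) powr \<delta>"
  have sm: "summable (\<lambda>k. x ^ k / Gamma (\<delta> * real k + 1))" by (rule Mittag_summable[OF \<delta>]) simp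
  have lim: "(\<lambda>k. M * (x ^ k / Gamma (\<delta> * real k + 1))) \<longlonglongrightarrow> 0"
    using tendsto_mult_right_zero[OF summable_LIMSEQ_zero[OF sm], of M] by simp
  have le: "\<bar>D u\<bar> \<le> M * (x ^ k / Gamma (\<delta> * real k + 1))" for k
  proof -
    have "(u-a) powr (\<delta> * real k) \<le> (b-a) powr (\<delta> * real k)" using u \<delta> by (intro powr_mono2) auto
    also have "(b-a) powr (\<delta> * real k) = ((b-a) powr \<delta>) ^ k"
    proof -
      have "(b-a) powr (\<delta> * real k) = ((b-a) powr \<delta>) powr (real k)" by (simp add: powr_powr)
      also have "\<dots> = ((b-a) powr \<delta>) ^ k" using ab by (simp add: powr_realpow)
      finally show ?thesis .
    qed
    finally have p: "(u-a) powr (\<delta> * real k) \<le> ((b-a) powr \<delta>) ^ k" .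
    have g: "Gamma (\<delta> * real k + 1) > 0" using \<delta> by (intro gp add_nonneg_pos) auto
    have "M * \<rho>^k * (u-a) powr (\<delta> * real k) \<le> M * \<rho>^k * ((b-a) powr \<delta>) ^ k"
      using p M(1) \<rho> by (intro mult_left_mono) auto
    then have "M * \<rho>^k * (u-a) powr (\<delta> * real k) / Gamma (\<delta> * real k + 1) \<le> M * (x ^ k / Gamma (\<delta> * real k + 1))"
      using g unfolding x_def by (simp add: divide_right_mono power_mult_distrib mult_ac)
    then show ?thesis using bound[of k] u by fastforce
  qed
  have "\<bar>D u\<bar> \<le> 0" by (rule LIMSEQ_le_const[OF lim]) (use le in auto)
  then show ?thesis by simp
qed




lemma abs_int_to_lborel:
  fixes f :: "real \<Rightarrow> real"
  assumes "f absolutely_integrable_on S" "set_borel_measurable lborel S f"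
  shows "set_integrable lborel S f" "(LINT x:S|lborel. f x) = integral S f"
proof -
  show si: "set_integrable lborel S f"
    using assms unfolding absolutely_integrable_on_def set_integrable_def set_borel_measurable_def
    by (subst (asm) integrable_completion) auto
  show "(LINT x:S|lborel. f x) = integral S f" by (rule set_borel_integral_eq_integral(2)[OF si])
qed

lemma lborel_to_abs_int:
  fixes f :: "real \<Rightarrow> real"
  assumes "set_integrable lborel S f"
  shows "f absolutely_integrable_on S"
proof -
  have m: "(\<lambda>x. indicator S x *\<^sub>R f x) \<in> borel_measurable lborel"
    using assms unfolding set_integrable_def by (rule borel_measurable_integrable)
  show ?thesis using assms m unfolding absolutely_integrable_on_def set_integrable_def
    by (subst integrable_completion) auto
qed

context
  fixes m n :: real and \<Phi> \<Phi>' :: "real \<Rightarrow> real"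
  assumes mn: "m < n" and mono: "mono_on {m..n} \<Phi>"
    and der: "\<And>l. l \<in> {m..n} \<Longrightarrow> (\<Phi> has_real_derivative \<Phi>' l) (at l within {m..n})"
    and nz: "\<And>l. l \<in> {m..n} \<Longrightarrow> \<Phi>' l \<noteq> 0"
begin

lemma Phi_cont: "continuous_on {m..n} \<Phi>"
  unfolding continuous_on_eq_continuous_within using der DERIV_continuous by blast

lemma Phi_mono: "x \<in> {m..n} \<Longrightarrow> y \<in> {m..n} \<Longrightarrow> x \<le> y \<Longrightarrow> \<Phi> x \<le> \<Phi> y"
  using mono by (simp add: mono_on_def)

lemma within_nontriv: "l \<in> {m..n} \<Longrightarrow> at l within {m..n} \<noteq> bot"
  using mn by (simp add: trivial_limit_within islimpt_Icc)

lemma Phi'_nonneg: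
  assumes l: "l \<in> {m..n}"
  shows "0 \<le> \<Phi>' l"
proof (rule tendsto_lowerbound)
  show "((\<lambda>y. (\<Phi> y - \<Phi> l) / (y - l)) \<longlongrightarrow> \<Phi>' l) (at l within {m..n})"
    using der[OF l] by (simp add: has_field_derivative_iff)
  show "\<forall>\<^sub>F y in at l within {m..n}. 0 \<le> (\<Phi> y - \<Phi> l) / (y - l)"
    unfolding eventually_at_filter
  proof (intro always_eventually allI impI)
    fix y assume y: "y \<noteq> l" "y \<in> {m..n}"
    show "0 \<le> (\<Phi> y - \<Phi> l) / (y - l)"
    proof (cases "y < l")
      case True
      then show ?thesis using Phi_mono[OF y(2) l] by (simp add: divide_nonpos_neg)
    next
      case False
      then have "l < y" using y by simp
      then show ?thesis using Phi_mono[OF l y(2)] by simp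
    qed
  qed
qed (rule within_nontriv[OF l])

lemma Phi'_pos: "l \<in> {m..n} \<Longrightarrow> 0 < \<Phi>' l"
  using Phi'_nonneg nz by (simp add: order_le_less)

lemma Phi_strict:
  assumes x: "x \<in> {m..n}" and y: "y \<in> {m..n}" and xy: "x < y"
  shows "\<Phi> x < \<Phi> y"
proof (rule ccontr)
  assume "\<not> \<Phi> x < \<Phi> y"
  then have eq: "\<Phi> x = \<Phi> y" using Phi_mono[OF x y] xy by simp
  have sub: "{x..y} \<subseteq> {m..n}" using x y by auto
  have const: "\<Phi> z = \<Phi> x" if z: "z \<in> {x..y}" for z
  proof -
    have zm: "z \<in> {m..n}" using sub z by blast
    have "\<Phi> x \<le> \<Phi> z" by (rule Phi_mono[OF x zm]) (use z in simp)
    moreover have "\<Phi> z \<le> \<Phi> y" by (rule Phi_mono[OF zm y]) (use z in simp)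
    ultimately show ?thesis using eq by linarith
  qed
  have "((\<lambda>z. (\<Phi> z - \<Phi> x) / (z - x)) \<longlongrightarrow> \<Phi>' x) (at x within {x..y})"
    using DERIV_subset[OF der[OF x] sub] unfolding has_field_derivative_iff .
  moreover have "\<forall>\<^sub>F z in at x within {x..y}. (\<Phi> z - \<Phi> x) / (z - x) = 0"
    unfolding eventually_at_filter
  proof (intro always_eventually allI impI)
    fix z assume "z \<noteq> x" "z \<in> {x..y}"
    then show "(\<Phi> z - \<Phi> x) / (z - x) = 0" using const[of z] by simp
  qed
  ultimately have "((\<lambda>z. 0) \<longlongrightarrow> \<Phi>' x) (at x within {x..y})"
    by (rule Lim_transform_eventually)
  moreover have nb: "at x within {x..y} \<noteq> bot" using xy by (simp add: trivial_limit_within islimpt_Icc)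
  ultimately have "\<Phi>' x = 0" using tendsto_unique[OF nb _ tendsto_const] by metis
  then show False using nz[OF x] by simp
qed

lemma Phi_inj: "inj_on \<Phi> {m..n}"
proof (rule inj_onI)
  fix x y assume x: "x \<in> {m..n}" and y: "y \<in> {m..n}" and e: "\<Phi> x = \<Phi> y"
  show "x = y"
  proof (rule ccontr)
    assume "x \<noteq> y"
    then have "x < y \<or> y < x" by auto
    then show False using Phi_strict[OF x y] Phi_strict[OF y x] e by auto
  qed
qed

lemma Phi_image:
  assumes t: "t \<in> {m..n}"
  shows "\<Phi> ` {m..t} = {\<Phi> m..\<Phi> t}"
proof
  show "\<Phi> ` {m..t} \<subseteq> {\<Phi> m..\<Phi> t}" using t by (auto intro!: Phi_mono)
  show "{\<Phi> m..\<Phi> t} \<subseteq> \<Phi> ` {m..t}"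
  proof
    fix v assume v: "v \<in> {\<Phi> m..\<Phi> t}"
    have "continuous_on {m..t} \<Phi>" by (rule continuous_on_subset[OF Phi_cont]) (use t in auto)
    then obtain x where "m \<le> x" "x \<le> t" "\<Phi> x = v" using IVT'[of \<Phi> m v t] v t by auto
    then show "v \<in> \<Phi> ` {m..t}" by auto
  qed
qed

definition "psi = the_inv_into {m..n} \<Phi>"

lemma psi_Phi: "x \<in> {m..n} \<Longrightarrow> psi (\<Phi> x) = x"
  unfolding psi_def by (rule the_inv_into_f_f[OF Phi_inj])

lemma img_n: "\<Phi> ` {m..n} = {\<Phi> m..\<Phi> n}" by (rule Phi_image) (use mn in auto)

lemma Phi_psi:
  assumes "u \<in> {\<Phi> m..\<Phi> n}"
  shows "\<Phi> (psi u) = u \<and> psi u \<in> {m..n}"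
proof -
  have img: "u \<in> \<Phi> ` {m..n}" using assms img_n by simp
  show ?thesis unfolding psi_def
    using f_the_inv_into_f[OF Phi_inj img] the_inv_into_into[OF Phi_inj img subset_refl] by simp
qed

lemma psi_cont: "continuous_on {\<Phi> m..\<Phi> n} psi"
  using continuous_on_inv_into[OF Phi_cont compact_Icc Phi_inj] unfolding psi_def img_n .

lemma ab: "\<Phi> m < \<Phi> n" using Phi_strict[of m n] mn by simp

lemma Phi'_meas: "set_borel_measurable lborel {m..n} \<Phi>'"
proof -
  define \<Phi>c where "\<Phi>c = (\<lambda>x. \<Phi> (max m (min n x)))"
  have \<Phi>cc: "continuous_on UNIV \<Phi>c" unfolding \<Phi>c_def by (rule clamp_cont[OF Phi_cont]) (use mn in simp)
  have \<Phi>cm[measurable]: "\<Phi>c \<in> borel_measurable borel" by (rule borel_measurable_continuous_onI[OF \<Phi>cc])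
  define q where "q = (\<lambda>k x. if m \<le> x \<and> x < n then (\<Phi>c (x + 1 / real (Suc k)) - \<Phi>c x) * real (Suc k) else 0)"
  define g where "g = (\<lambda>x. if m \<le> x \<and> x < n then \<Phi>' x else 0)"
  have qm: "q k \<in> borel_measurable lborel" for k unfolding q_def by measurable
  have conv: "(\<lambda>k. q k x) \<longlonglongrightarrow> g x" for x
  proof (cases "m \<le> x \<and> x < n")
    case True
    then have x: "x \<in> {m..n}" by auto
    define y where "y = (\<lambda>k. x + 1 / real (Suc k))"
    have inv0: "(\<lambda>k. 1 / real (Suc k)) \<longlonglongrightarrow> 0"
      using LIMSEQ_inverse_real_of_nat by (simp add: inverse_eq_divide)
    have yl: "y \<longlonglongrightarrow> x" unfolding y_def using tendsto_add[OF tendsto_const inv0, of x] by simp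
    have ev: "\<forall>\<^sub>F k in sequentially. 1 / real (Suc k) < n - x"
      by (rule order_tendstoD(2)[OF inv0]) (use True in simp)
    have evy: "\<forall>\<^sub>F k in sequentially. y k \<in> {m..n} \<and> y k \<noteq> x"
      using ev
    proof eventually_elim
      case (elim k)
      have p: "0 < 1 / real (Suc k)" by simp
      have a1: "m \<le> x + 1 / real (Suc k)" using p True by linarith
      have a2: "x + 1 / real (Suc k) \<le> n" using elim by linarith
      have a3: "x + 1 / real (Suc k) \<noteq> x" using p by linarith
      show ?case unfolding y_def using a1 a2 a3 by simp
    qed
    have fl: "filterlim y (at x within {m..n}) sequentially"
      unfolding filterlim_at using evy yl by simp
    have dq: "((\<lambda>z. (\<Phi> z - \<Phi> x) / (z - x)) \<longlongrightarrow> \<Phi>' x) (at x within {m..n})"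
      using der[OF x] unfolding has_field_derivative_iff .
    have "(\<lambda>k. (\<Phi> (y k) - \<Phi> x) / (y k - x)) \<longlonglongrightarrow> \<Phi>' x"
      using filterlim_compose[OF dq fl] .
    moreover have "\<forall>\<^sub>F k in sequentially. (\<Phi> (y k) - \<Phi> x) / (y k - x) = q k x"
      using evy
    proof eventually_elim
      case (elim k)
      then have "\<Phi>c (y k) = \<Phi> (y k)" "\<Phi>c x = \<Phi> x" using True by (auto simp: \<Phi>c_def)
      then show ?case using True by (simp add: q_def y_def)
    qed
    ultimately have "(\<lambda>k. q k x) \<longlonglongrightarrow> \<Phi>' x" by (rule Lim_transform_eventually)
    then show ?thesis using True by (simp add: g_def)
  next
    case False
    then have "q k x = 0" for k unfolding q_def by auto
    moreover have "g x = 0" using False unfolding g_def by auto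
    ultimately show ?thesis by simp
  qed
  have gm[measurable]: "g \<in> borel_measurable lborel"
    by (rule borel_measurable_LIMSEQ_real[OF conv qm])
  have "(\<lambda>x. indicator {m..n} x *\<^sub>R \<Phi>' x) = (\<lambda>x. g x + indicator {n} x * \<Phi>' n)"
    by (rule ext) (use mn in \<open>auto simp: g_def indicator_def\<close>)
  moreover have "(\<lambda>x. g x + indicator {n} x * \<Phi>' n) \<in> borel_measurable lborel" by measurable
  ultimately show ?thesis unfolding set_borel_measurable_def by simp
qed

lemma CV:
  fixes g :: "real \<Rightarrow> real"
  assumes t: "t \<in> {m..n}" and gm: "set_borel_measurable lborel {\<Phi> m..\<Phi> t} g"
    and gi: "set_integrable lborel {\<Phi> m..\<Phi> t} g"
  shows "set_integrable lborel {m..t} (\<lambda>\<eta>. \<Phi>' \<eta> * g (\<Phi> \<eta>))"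
    and "(LINT \<eta>:{m..t}|lborel. \<Phi>' \<eta> * g (\<Phi> \<eta>)) = (LINT u:{\<Phi> m..\<Phi> t}|lborel. g u)"
proof -
  define b where "b = (LINT u:{\<Phi> m..\<Phi> t}|lborel. g u)"
  have sub: "{m..t} \<subseteq> {m..n}" using t by auto
  have rhs: "g absolutely_integrable_on (\<Phi> ` {m..t}) \<and> integral (\<Phi> ` {m..t}) g = b"
    unfolding Phi_image[OF t] b_def
    using lborel_to_abs_int[OF gi] set_borel_integral_eq_integral(2)[OF gi] by simp
  have derS: "(\<Phi> has_field_derivative \<Phi>' x) (at x within {m..t})" if "x \<in> {m..t}" for x
    using DERIV_subset[OF der sub] that sub by blast
  have injS: "inj_on \<Phi> {m..t}" using Phi_inj sub by (rule inj_on_subset)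
  have lhs: "(\<lambda>x. \<bar>\<Phi>' x\<bar> * g (\<Phi> x)) absolutely_integrable_on {m..t} \<and> integral {m..t} (\<lambda>x. \<bar>\<Phi>' x\<bar> * g (\<Phi> x)) = b"
    using has_absolute_integral_change_of_variables_1'[of "{m..t}" \<Phi> \<Phi>' g b, OF _ derS injS] rhs by auto
  define \<Phi>c where "\<Phi>c = (\<lambda>x. \<Phi> (max m (min n x)))"
  have \<Phi>cc: "continuous_on UNIV \<Phi>c" unfolding \<Phi>c_def by (rule clamp_cont[OF Phi_cont]) (use mn in simp)
  have \<Phi>cm: "\<Phi>c \<in> borel_measurable lborel" using borel_measurable_continuous_onI[OF \<Phi>cc] by simp
  have Gm: "(\<lambda>u. indicator {\<Phi> m..\<Phi> t} u *\<^sub>R g u) \<in> borel_measurable lborel" using gm unfolding set_borel_measurable_def .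
  have GPm: "(\<lambda>x. (\<lambda>u. indicator {\<Phi> m..\<Phi> t} u *\<^sub>R g u) (\<Phi>c x)) \<in> borel_measurable lborel"
    by (rule measurable_compose[OF \<Phi>cm]) (use Gm in simp)
  have Pm: "(\<lambda>x. indicator {m..n} x *\<^sub>R \<Phi>' x) \<in> borel_measurable lborel"
    using Phi'_meas unfolding set_borel_measurable_def .
  have eqf: "(\<lambda>x. indicator {m..t} x *\<^sub>R (\<bar>\<Phi>' x\<bar> * g (\<Phi> x))) =
     (\<lambda>x. \<bar>indicator {m..n} x *\<^sub>R \<Phi>' x\<bar> * indicator {m..t} x * ((\<lambda>u. indicator {\<Phi> m..\<Phi> t} u *\<^sub>R g u) (\<Phi>c x)))"
  proof (rule ext)
    fix x show "indicator {m..t} x *\<^sub>R (\<bar>\<Phi>' x\<bar> * g (\<Phi> x)) =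
     \<bar>indicator {m..n} x *\<^sub>R \<Phi>' x\<bar> * indicator {m..t} x * ((\<lambda>u. indicator {\<Phi> m..\<Phi> t} u *\<^sub>R g u) (\<Phi>c x))"
    proof (cases "x \<in> {m..t}")
      case True
      then have "x \<in> {m..n}" using sub by blast
      moreover have "\<Phi>c x = \<Phi> x" using True t by (auto simp: \<Phi>c_def)
      moreover have "\<Phi> x \<in> {\<Phi> m..\<Phi> t}" using Phi_image[OF t] True by blast
      ultimately show ?thesis using True by simp
    qed simp
  qed
  have mf: "set_borel_measurable lborel {m..t} (\<lambda>x. \<bar>\<Phi>' x\<bar> * g (\<Phi> x))"
    unfolding set_borel_measurable_def eqf using Pm GPm by measurable
  note L = abs_int_to_lborel[OF conjunct1[OF lhs] mf]
  have cong: "(LINT x:{m..t}|lborel. \<bar>\<Phi>' x\<bar> * g (\<Phi> x)) = (LINT x:{m..t}|lborel. \<Phi>' x * g (\<Phi> x))"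
    by (rule set_lebesgue_integral_cong) (use Phi'_pos sub in \<open>auto simp: abs_of_pos\<close>)
  have icong: "set_integrable lborel {m..t} (\<lambda>x. \<bar>\<Phi>' x\<bar> * g (\<Phi> x)) = set_integrable lborel {m..t} (\<lambda>x. \<Phi>' x * g (\<Phi> x))"
    by (rule set_integrable_cong) (use Phi'_pos sub in \<open>auto simp: abs_of_pos\<close>)
  show "set_integrable lborel {m..t} (\<lambda>\<eta>. \<Phi>' \<eta> * g (\<Phi> \<eta>))" using L(1) icong by simp
  show "(LINT \<eta>:{m..t}|lborel. \<Phi>' \<eta> * g (\<Phi> \<eta>)) = (LINT u:{\<Phi> m..\<Phi> t}|lborel. g u)"
    using L(2) cong lhs b_def by simp
qed

end





context
  fixes m n :: real and \<Phi> \<Phi>' :: "real \<Rightarrow> real"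
  assumes mn: "m < n" and mono: "mono_on {m..n} \<Phi>"
    and der: "\<And>l. l \<in> {m..n} \<Longrightarrow> (\<Phi> has_real_derivative \<Phi>' l) (at l within {m..n})"
    and nz: "\<And>l. l \<in> {m..n} \<Longrightarrow> \<Phi>' l \<noteq> 0"
begin

lemmas PA = mn mono der nz

lemma Phi_in: "t \<in> {m..n} \<Longrightarrow> \<Phi> t \<in> {\<Phi> m..\<Phi> n}"
  using Phi_mono[OF PA] mn by auto

lemma RL_transfer:
  fixes w :: "real \<Rightarrow> real"
  assumes t: "t \<in> {m..n}" and g: "0 < \<gamma>" and wc: "continuous_on {m..n} w"
  shows "RL_int m \<Phi> \<Phi>' \<gamma> (\<lambda>\<eta>. w \<eta> - w m) t = Jf (\<Phi> m) \<gamma> (\<lambda>u. w (psi m n \<Phi> u) - w m) (\<Phi> t)"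
proof -
  define W where "W = (\<lambda>u. w (psi m n \<Phi> u) - w m)"
  have Wc0: "continuous_on {\<Phi> m..\<Phi> n} W" unfolding W_def
    by (intro continuous_intros continuous_on_compose2[OF wc psi_cont[OF PA]]) (use Phi_psi[OF PA] in auto)
  have Wc: "continuous_on {\<Phi> m..\<Phi> t} W"
    by (rule continuous_on_subset[OF Wc0]) (use Phi_mono[OF PA] t in auto)
  define g where "g = (\<lambda>u. (\<Phi> t - u) powr (\<gamma>-1) * W u)"
  have gm: "set_borel_measurable lborel {\<Phi> m..\<Phi> t} g"
    unfolding g_def by (rule kern_times_measurable[OF set_borel_measurable_cont[OF Wc]])
  have gi: "set_integrable lborel {\<Phi> m..\<Phi> t} g"
    unfolding g_def by (rule J_integrable[OF g Wc])
  have cv: "(LINT \<eta>:{m..t}|lborel. \<Phi>' \<eta> * g (\<Phi> \<eta>)) = (LINT u:{\<Phi> m..\<Phi> t}|lborel. g u)"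
    by (rule CV(2)[OF PA t gm gi])
  have "(LINT \<eta>:{m..t}|lborel. \<Phi>' \<eta> * (\<Phi> t - \<Phi> \<eta>) powr (\<gamma> - 1) * (w \<eta> - w m)) = (LINT \<eta>:{m..t}|lborel. \<Phi>' \<eta> * g (\<Phi> \<eta>))"
  proof -
    have pe: "\<And>\<eta>. \<eta> \<in> {m..t} \<Longrightarrow> psi m n \<Phi> (\<Phi> \<eta>) = \<eta>" using t by (intro psi_Phi[OF PA]) auto
    show ?thesis by (rule set_lebesgue_integral_cong) (auto simp: g_def W_def pe)
  qed
  then have "RL_int m \<Phi> \<Phi>' \<gamma> (\<lambda>\<eta>. w \<eta> - w m) t = 1 / Gamma \<gamma> * (LINT \<eta>:{m..t}|lborel. \<Phi>' \<eta> * g (\<Phi> \<eta>))"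
    unfolding RL_int_def by simp
  also have "\<dots> = 1 / Gamma \<gamma> * (LINT u:{\<Phi> m..\<Phi> t}|lborel. g u)" by (simp only: cv)
  also have "\<dots> = Jf (\<Phi> m) \<gamma> W (\<Phi> t)" unfolding Jf_def g_def by simp
  finally show ?thesis unfolding W_def .
qed

lemma deriv_from_J1:
  fixes G F :: "real \<Rightarrow> real"
  assumes Gc: "continuous_on {\<Phi> m..\<Phi> n} G" and F: "\<And>t. t \<in> {m..n} \<Longrightarrow> F t = c + Jf (\<Phi> m) 1 G (\<Phi> t)"
    and l: "l \<in> {m..n}"
  shows "(F has_vector_derivative \<Phi>' l * G (\<Phi> l)) (at l within {m..n})"
proof -
  have d1: "(Jf (\<Phi> m) 1 G has_vector_derivative G (\<Phi> l)) (at (\<Phi> l) within \<Phi> ` {m..n})"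
  proof -
    have e: "\<Phi> ` {m..n} = {\<Phi> m..\<Phi> n}" by (rule img_n[OF PA])
    note J_one_deriv[OF Gc Phi_in[OF l]]
    then show ?thesis unfolding e by simp
  qed
  have d0: "(\<Phi> has_vector_derivative \<Phi>' l) (at l within {m..n})"
    using der[OF l] by (simp add: has_real_derivative_iff_has_vector_derivative)
  have d2: "((\<lambda>t. c + (Jf (\<Phi> m) 1 G \<circ> \<Phi>) t) has_vector_derivative 0 + \<Phi>' l *\<^sub>R G (\<Phi> l)) (at l within {m..n})"
    by (intro has_vector_derivative_add has_vector_derivative_const vector_diff_chain_within[OF d0 d1])
  have d3: "((\<lambda>t. c + (Jf (\<Phi> m) 1 G \<circ> \<Phi>) t) has_vector_derivative \<Phi>' l * G (\<Phi> l)) (at l within {m..n})"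
    using d2 by simp
  show ?thesis
    by (rule has_vector_derivative_transform_within[OF d3 zero_less_one l]) (use F in simp)
qed

lemma caputo_deriv:
  assumes l: "l \<in> {m..n}" and ce: "caputo_exists m n \<Phi> \<Phi>' \<gamma> w l"
  shows "((if \<gamma> = 1 then w else (\<lambda>t. RL_int m \<Phi> \<Phi>' (1 - \<gamma>) (\<lambda>\<eta>. w \<eta> - w m) t))
           has_vector_derivative \<Phi>' l * caputo m n \<Phi> \<Phi>' \<gamma> w l) (at l within {m..n})"
proof (cases "\<gamma> = 1")
  case True
  then show ?thesis using ce nz[OF l] unfolding caputo_exists_def caputo_def
    by (simp add: vector_derivative_works)
next
  case False
  then show ?thesis using ce nz[OF l] unfolding caputo_exists_def caputo_def
    by (simp add: vector_derivative_works)
qed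

lemma caputo_from_deriv:
  assumes l: "l \<in> {m..n}"
    and d: "((if \<gamma> = 1 then w else (\<lambda>t. RL_int m \<Phi> \<Phi>' (1 - \<gamma>) (\<lambda>\<eta>. w \<eta> - w m) t))
           has_vector_derivative \<Phi>' l * v) (at l within {m..n})"
  shows "caputo_exists m n \<Phi> \<Phi>' \<gamma> w l \<and> caputo m n \<Phi> \<Phi>' \<gamma> w l = v"
proof (cases "\<gamma> = 1")
  case True
  then have d': "(w has_vector_derivative \<Phi>' l * v) (at l within {m..n})" using d by simp
  show ?thesis using True vector_derivative_within_closed_interval[OF mn l d'] nz[OF l] d'
    unfolding caputo_exists_def caputo_def by (auto intro: differentiableI_vector)
next
  case False
  then have d': "((\<lambda>t. RL_int m \<Phi> \<Phi>' (1 - \<gamma>) (\<lambda>\<eta>. w \<eta> - w m) t) has_vector_derivative \<Phi>' l * v) (at l within {m..n})"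
    using d by simp
  show ?thesis using False vector_derivative_within_closed_interval[OF mn l d'] nz[OF l] d'
    unfolding caputo_exists_def caputo_def by (auto intro: differentiableI_vector)
qed

end

theorem mainTheorem1:
  fixes m n \<sigma> \<kappa> \<mu> \<rho> :: real
    and \<Phi> \<Phi>' h \<alpha> :: "real \<Rightarrow> real"
  assumes "0 < m" and "m < n" and "0 < \<sigma>"
    and "mono_on {m..n} \<Phi>"
    and "\<And>l. l \<in> {m..n} \<Longrightarrow> (\<Phi> has_real_derivative \<Phi>' l) (at l within {m..n})"
    and "\<And>l. l \<in> {m..n} \<Longrightarrow> \<Phi>' l \<noteq> 0"
    and "0 < \<kappa>" and "\<kappa> < \<mu>" and "\<mu> \<le> 1" and "0 < \<rho>"
    and "continuous_on {m..n} h"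
    and "continuous_on {m - \<sigma>..m} \<alpha>"
  shows "is_solution m n \<sigma> \<Phi> \<Phi>' \<kappa> \<mu> \<rho> h \<alpha>
           (\<lambda>l. if l \<le> m then \<alpha> l
                 else \<alpha> m + (LINT \<eta>:{m..l}|lborel.
                     \<Phi>' \<eta> * (\<Phi> l - \<Phi> \<eta>) powr (\<mu> - 1)
                       * ML2 (\<mu> - \<kappa>) \<mu> (- \<rho> * (\<Phi> l - \<Phi> \<eta>) powr (\<mu> - \<kappa>)) * h \<eta>))
       \<and> (\<forall>z. is_solution m n \<sigma> \<Phi> \<Phi>' \<kappa> \<mu> \<rho> h \<alpha> z \<longrightarrow>
             (\<forall>l\<in>{m - \<sigma>..n}. z l = (if l \<le> m then \<alpha> l
                 else \<alpha> m + (LINT \<eta>:{m..l}|lborel.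
                     \<Phi>' \<eta> * (\<Phi> l - \<Phi> \<eta>) powr (\<mu> - 1)
                       * ML2 (\<mu> - \<kappa>) \<mu> (- \<rho> * (\<Phi> l - \<Phi> \<eta>) powr (\<mu> - \<kappa>)) * h \<eta>))))"
proof -
  note PA = assms(2) assms(4) assms(5) assms(6)
  have mn: "m < n" by (rule assms(2))
  define zE where "zE = (\<lambda>l. if l \<le> m then \<alpha> l
                 else \<alpha> m + (LINT \<eta>:{m..l}|lborel.
                     \<Phi>' \<eta> * (\<Phi> l - \<Phi> \<eta>) powr (\<mu> - 1)
                       * ML2 (\<mu> - \<kappa>) \<mu> (- \<rho> * (\<Phi> l - \<Phi> \<eta>) powr (\<mu> - \<kappa>)) * h \<eta>))"
  define a where "a = \<Phi> m"
  define b where "b = \<Phi> n"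
  have ab: "a < b" unfolding a_def b_def by (rule ab[OF PA])
  define \<psi> where "\<psi> = psi m n \<Phi>"
  have \<psi>1: "\<And>u. u \<in> {a..b} \<Longrightarrow> \<Phi> (\<psi> u) = u \<and> \<psi> u \<in> {m..n}"
    unfolding \<psi>_def a_def b_def by (rule Phi_psi[OF PA])
  have \<psi>2: "\<And>x. x \<in> {m..n} \<Longrightarrow> \<psi> (\<Phi> x) = x"
    unfolding \<psi>_def by (rule psi_Phi[OF PA])
  have \<Phi>in: "\<And>t. t \<in> {m..n} \<Longrightarrow> \<Phi> t \<in> {a..b}"
    unfolding a_def b_def by (rule Phi_in[OF PA])
  have \<psi>a: "\<psi> a = m" unfolding a_def using \<psi>2[of m] mn by simp
  define H where "H = (\<lambda>u. h (\<psi> u))"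
  have Hc: "continuous_on {a..b} H" unfolding H_def
    by (rule continuous_on_compose2[OF assms(11) psi_cont[OF PA, folded a_def b_def \<psi>_def]]) (use \<psi>1 in auto)
  obtain M where M: "\<And>s. s \<in> {a..b} \<Longrightarrow> \<bar>H s\<bar> \<le> M" using cont_bound[OF Hc] by blast
  note CA = ab Hc assms(7) assms(8) assms(9) assms(10) M
  define Z where "Z = Zs a H \<kappa> \<mu> \<rho>"
  define g1 where "g1 = G1 a H \<kappa> \<mu> \<rho>"
  define g2 where "g2 = G2 a H \<kappa> \<mu> \<rho>"
  have Zc: "continuous_on {a..b} Z" unfolding Z_def by (rule Zs_cont[OF CA])
  have g1c: "continuous_on {a..b} g1" unfolding g1_def by (rule G1_cont[OF CA])
  have g2c: "continuous_on {a..b} g2" unfolding g2_def by (rule G2_cont[OF CA])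
  have Za: "Z a = 0" unfolding Z_def by (rule Zs_a[OF CA])
  have zE_eq: "zE l = \<alpha> m + Z (\<Phi> l)" if l: "l \<in> {m..n}" for l
  proof (cases "l = m")
    case True
    then show ?thesis using Za by (simp add: zE_def a_def)
  next
    case False
    then have lm: "\<not> l \<le> m" using l by auto
    define K where "K = (\<lambda>u. (\<Phi> l - u) powr (\<mu> - 1) * ML2 (\<mu> - \<kappa>) \<mu> (- \<rho> * (\<Phi> l - u) powr (\<mu> - \<kappa>)) * H u)"
    have Kalt: "K = (\<lambda>s. (\<Phi> l - s) powr (\<mu>-1) * (\<Sum>k. (- \<rho> * (\<Phi> l - s) powr (\<mu> - \<kappa>))^k / Gamma ((\<mu> - \<kappa>) * real k + \<mu>)) * H s)"
      unfolding K_def ML2_def by simp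
    have Ki: "set_integrable lborel {a..\<Phi> l} K"
      unfolding Kalt by (rule kernel_eq(2)[OF CA \<Phi>in[OF l]])
    have Kv: "(LINT u:{a..\<Phi> l}|lborel. K u) = Z (\<Phi> l)"
      unfolding Kalt Z_def by (rule kernel_eq(1)[OF CA \<Phi>in[OF l]])
    have Km: "set_borel_measurable lborel {a..\<Phi> l} K"
      using Ki unfolding set_integrable_def set_borel_measurable_def by (rule borel_measurable_integrable)
    have cv: "(LINT \<eta>:{m..l}|lborel. \<Phi>' \<eta> * K (\<Phi> \<eta>)) = (LINT u:{a..\<Phi> l}|lborel. K u)"
      unfolding a_def by (rule CV(2)[OF PA l Km[unfolded a_def] Ki[unfolded a_def]])
    have "(LINT \<eta>:{m..l}|lborel. \<Phi>' \<eta> * (\<Phi> l - \<Phi> \<eta>) powr (\<mu> - 1)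
                       * ML2 (\<mu> - \<kappa>) \<mu> (- \<rho> * (\<Phi> l - \<Phi> \<eta>) powr (\<mu> - \<kappa>)) * h \<eta>)
        = (LINT \<eta>:{m..l}|lborel. \<Phi>' \<eta> * K (\<Phi> \<eta>))"
    proof -
      have pe: "\<And>\<eta>. \<eta> \<in> {m..l} \<Longrightarrow> H (\<Phi> \<eta>) = h \<eta>" unfolding H_def using \<psi>2 l by auto
      show ?thesis by (rule set_lebesgue_integral_cong) (auto simp: K_def pe mult_ac)
    qed
    then show ?thesis using lm cv Kv by (simp add: zE_def)
  qed
  have zEc: "continuous_on {m..n} zE"
  proof -
    have "continuous_on {m..n} (\<lambda>l. \<alpha> m + Z (\<Phi> l))"
      by (intro continuous_intros continuous_on_compose2[OF Zc Phi_cont[OF PA]]) (use \<Phi>in in auto)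
    then show ?thesis by (rule continuous_on_eq) (simp add: zE_eq)
  qed
  have zEm: "zE m = \<alpha> m" by (simp add: zE_def)
  have zE_J: "\<And>u. u \<in> {a..b} \<Longrightarrow> zE (\<psi> u) - zE m = Z u" using zE_eq \<psi>1 zEm by auto
  have RLE: "RL_int m \<Phi> \<Phi>' g (\<lambda>\<eta>. zE \<eta> - zE m) t = Jf a g Z (\<Phi> t)" if t: "t \<in> {m..n}" and g: "0 < g" for t g
  proof -
    have "RL_int m \<Phi> \<Phi>' g (\<lambda>\<eta>. zE \<eta> - zE m) t = Jf (\<Phi> m) g (\<lambda>u. zE (psi m n \<Phi> u) - zE m) (\<Phi> t)"
      by (rule RL_transfer[OF PA t g zEc])
    also have "\<dots> = Jf a g Z (\<Phi> t)" unfolding a_def[symmetric] \<psi>_def[symmetric]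
      by (rule J_cong) (use zE_J \<Phi>in[OF t] in auto)
    finally show ?thesis .
  qed
  have g1c': "continuous_on {\<Phi> m..\<Phi> n} g1" using g1c by (simp add: a_def b_def)
  have g2c': "continuous_on {\<Phi> m..\<Phi> n} g2" using g2c by (simp add: a_def b_def)
  have capE_mu: "caputo_exists m n \<Phi> \<Phi>' \<mu> zE l \<and> caputo m n \<Phi> \<Phi>' \<mu> zE l = g1 (\<Phi> l)" if l: "l \<in> {m..n}" for l
  proof -
    have F: "(if \<mu> = 1 then zE else (\<lambda>t. RL_int m \<Phi> \<Phi>' (1-\<mu>) (\<lambda>\<eta>. zE \<eta> - zE m) t)) t
        = (if \<mu> = 1 then \<alpha> m else 0) + Jf (\<Phi> m) 1 g1 (\<Phi> t)" if t: "t \<in> {m..n}" for t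
    proof (cases "\<mu> = 1")
      case True
      then show ?thesis using zE_eq[OF t] T_mu[OF CA \<Phi>in[OF t]] by (simp add: Z_def g1_def a_def)
    next
      case False
      then have "0 < 1 - \<mu>" using assms(9) by simp
      then show ?thesis using False RLE[OF t] T_mu[OF CA \<Phi>in[OF t]] by (simp add: Z_def g1_def a_def)
    qed
    show ?thesis by (rule caputo_from_deriv[OF PA l deriv_from_J1[OF PA g1c' F l]])
  qed
  have capE_kappa: "caputo_exists m n \<Phi> \<Phi>' \<kappa> zE l \<and> caputo m n \<Phi> \<Phi>' \<kappa> zE l = g2 (\<Phi> l)" if l: "l \<in> {m..n}" for l
  proof -
    have k1: "\<kappa> \<noteq> 1" "0 < 1 - \<kappa>" using assms(8,9) by auto
    have F: "(if \<kappa> = 1 then zE else (\<lambda>t. RL_int m \<Phi> \<Phi>' (1-\<kappa>) (\<lambda>\<eta>. zE \<eta> - zE m) t)) t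
        = 0 + Jf (\<Phi> m) 1 g2 (\<Phi> t)" if t: "t \<in> {m..n}" for t
      using k1 RLE[OF t k1(2)] T_kappa[OF CA \<Phi>in[OF t]] by (simp add: Z_def g2_def a_def)
    show ?thesis by (rule caputo_from_deriv[OF PA l deriv_from_J1[OF PA g2c' F l]])
  qed
  have sumE: "caputo m n \<Phi> \<Phi>' \<mu> zE l + \<rho> * caputo m n \<Phi> \<Phi>' \<kappa> zE l = h l" if l: "l \<in> {m..n}" for l
  proof -
    have "g1 (\<Phi> l) + \<rho> * g2 (\<Phi> l) = H (\<Phi> l)" unfolding g1_def g2_def by (rule G_sum[OF CA \<Phi>in[OF l]])
    then show ?thesis using capE_mu[OF l] capE_kappa[OF l] \<psi>2[OF l] by (simp add: H_def)
  qed
  have zEc2: "continuous_on {m - \<sigma>..n} zE"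
  proof -
    have c1: "continuous_on {m - \<sigma>..m} zE"
      by (rule continuous_on_eq[OF assms(12)]) (simp add: zE_def)
    have "continuous_on ({m - \<sigma>..m} \<union> {m..n}) zE"
      by (rule continuous_on_closed_Un[OF closed_atLeastAtMost closed_atLeastAtMost c1 zEc])
    moreover have "{m - \<sigma>..m} \<union> {m..n} = {m - \<sigma>..n}" using assms(3) mn by auto
    ultimately show ?thesis by simp
  qed
  have ex: "is_solution m n \<sigma> \<Phi> \<Phi>' \<kappa> \<mu> \<rho> h \<alpha> zE"
    unfolding is_solution_def using zEc2 capE_mu capE_kappa sumE by (simp add: zE_def)
  have un: "\<forall>z. is_solution m n \<sigma> \<Phi> \<Phi>' \<kappa> \<mu> \<rho> h \<alpha> z \<longrightarrow> (\<forall>l\<in>{m - \<sigma>..n}. z l = zE l)"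
  proof (intro allI impI ballI)
    fix z l assume zs: "is_solution m n \<sigma> \<Phi> \<Phi>' \<kappa> \<mu> \<rho> h \<alpha> z" and l: "l \<in> {m - \<sigma>..n}"
    have zc: "continuous_on {m - \<sigma>..n} z" and z\<alpha>: "\<And>l. l \<in> {m - \<sigma>..m} \<Longrightarrow> z l = \<alpha> l"
      and zcap: "\<And>l. l \<in> {m..n} \<Longrightarrow> caputo_exists m n \<Phi> \<Phi>' \<mu> z l \<and> caputo_exists m n \<Phi> \<Phi>' \<kappa> z l \<and>
        caputo m n \<Phi> \<Phi>' \<mu> z l + \<rho> * caputo m n \<Phi> \<Phi>' \<kappa> z l = h l"
      using zs unfolding is_solution_def by auto
    have zc': "continuous_on {m..n} z" by (rule continuous_on_subset[OF zc]) (use assms(3) in auto)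
    have zm: "z m = \<alpha> m" using z\<alpha>[of m] assms(3) by auto
    show "z l = zE l"
    proof (cases "l \<le> m")
      case True
      then show ?thesis using z\<alpha>[of l] l by (simp add: zE_def)
    next
      case False
      then have lmn: "l \<in> {m..n}" using l by auto
      define Fz where "Fz = (\<lambda>g. if g = 1 then z else (\<lambda>t. RL_int m \<Phi> \<Phi>' (1 - g) (\<lambda>\<eta>. z \<eta> - z m) t))"
      define FE where "FE = (\<lambda>g. if g = 1 then zE else (\<lambda>t. RL_int m \<Phi> \<Phi>' (1 - g) (\<lambda>\<eta>. zE \<eta> - zE m) t))"
      define B where "B = (\<lambda>t. (Fz \<mu> t + \<rho> * Fz \<kappa> t) - (FE \<mu> t + \<rho> * FE \<kappa> t))"
      have dB: "(B has_field_derivative 0) (at t within {m..n})" if t: "t \<in> {m..n}" for t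
      proof -
        have d1: "(Fz \<mu> has_field_derivative \<Phi>' t * caputo m n \<Phi> \<Phi>' \<mu> z t) (at t within {m..n})"
          using caputo_deriv[OF PA t, of \<mu> z] zcap[OF t] unfolding Fz_def
          by (simp add: has_real_derivative_iff_has_vector_derivative)
        have d2: "(Fz \<kappa> has_field_derivative \<Phi>' t * caputo m n \<Phi> \<Phi>' \<kappa> z t) (at t within {m..n})"
          using caputo_deriv[OF PA t, of \<kappa> z] zcap[OF t] unfolding Fz_def
          by (simp add: has_real_derivative_iff_has_vector_derivative)
        have d3: "(FE \<mu> has_field_derivative \<Phi>' t * caputo m n \<Phi> \<Phi>' \<mu> zE t) (at t within {m..n})"
          using caputo_deriv[OF PA t, of \<mu> zE] capE_mu[OF t] unfolding FE_def
          by (simp add: has_real_derivative_iff_has_vector_derivative)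
        have d4: "(FE \<kappa> has_field_derivative \<Phi>' t * caputo m n \<Phi> \<Phi>' \<kappa> zE t) (at t within {m..n})"
          using caputo_deriv[OF PA t, of \<kappa> zE] capE_kappa[OF t] unfolding FE_def
          by (simp add: has_real_derivative_iff_has_vector_derivative)
        have "(B has_field_derivative (\<Phi>' t * caputo m n \<Phi> \<Phi>' \<mu> z t + \<rho> * (\<Phi>' t * caputo m n \<Phi> \<Phi>' \<kappa> z t))
            - (\<Phi>' t * caputo m n \<Phi> \<Phi>' \<mu> zE t + \<rho> * (\<Phi>' t * caputo m n \<Phi> \<Phi>' \<kappa> zE t))) (at t within {m..n})"
          unfolding B_def by (intro DERIV_diff DERIV_add DERIV_cmult d1 d2 d3 d4)
        moreover have "(\<Phi>' t * caputo m n \<Phi> \<Phi>' \<mu> z t + \<rho> * (\<Phi>' t * caputo m n \<Phi> \<Phi>' \<kappa> z t))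
            - (\<Phi>' t * caputo m n \<Phi> \<Phi>' \<mu> zE t + \<rho> * (\<Phi>' t * caputo m n \<Phi> \<Phi>' \<kappa> zE t))
            = \<Phi>' t * ((caputo m n \<Phi> \<Phi>' \<mu> z t + \<rho> * caputo m n \<Phi> \<Phi>' \<kappa> z t)
               - (caputo m n \<Phi> \<Phi>' \<mu> zE t + \<rho> * caputo m n \<Phi> \<Phi>' \<kappa> zE t))"
          by (simp add: algebra_simps)
        moreover have "\<dots> = 0" using zcap[OF t] sumE[OF t] by simp
        ultimately show ?thesis by simp
      qed
      obtain c where c: "\<And>x. x \<in> {m..n} \<Longrightarrow> B x = c"
        using has_field_derivative_zero_constant[OF convex_real_interval(5) dB] by blast
      have RL0: "RL_int m \<Phi> \<Phi>' g f m = 0" for g f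
        unfolding RL_int_def by (simp add: LINT_singleton)
      have k1: "\<kappa> \<noteq> 1" using assms(8,9) by simp
      have Bm: "B m = 0" unfolding B_def Fz_def FE_def using k1 zm zEm by (simp add: RL0)
      have B0: "B t = 0" if "t \<in> {m..n}" for t using c[OF that] c[of m] Bm mn by simp
      define D where "D = (\<lambda>u. z (\<psi> u) - zE (\<psi> u))"
      have Dc: "continuous_on {a..b} D" unfolding D_def
        by (intro continuous_intros continuous_on_compose2[OF zc' psi_cont[OF PA, folded a_def b_def \<psi>_def]]
              continuous_on_compose2[OF zEc psi_cont[OF PA, folded a_def b_def \<psi>_def]]) (use \<psi>1 in auto)
      have Da: "D a = 0" unfolding D_def \<psi>a using zm zEm by simp
      have diffJ: "Fz g t - FE g t = (if g = 1 then D (\<Phi> t) else Jf a (1-g) D (\<Phi> t))"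
        if t: "t \<in> {m..n}" and g: "0 < g" "g \<le> 1" for t g
      proof (cases "g = 1")
        case True
        then show ?thesis unfolding Fz_def FE_def D_def using \<psi>2[OF t] by simp
      next
        case False
        then have g1: "0 < 1 - g" using g by simp
        have sub: "{a..\<Phi> t} \<subseteq> {a..b}" using \<Phi>in[OF t] by auto
        define Wz where "Wz = (\<lambda>u. z (psi m n \<Phi> u) - z m)"
        define WE where "WE = (\<lambda>u. zE (psi m n \<Phi> u) - zE m)"
        have Wzc: "continuous_on {a..b} Wz" unfolding Wz_def \<psi>_def[symmetric]
          by (intro continuous_intros continuous_on_compose2[OF zc' psi_cont[OF PA, folded a_def b_def \<psi>_def]]) (use \<psi>1 in auto)
        have WEc: "continuous_on {a..b} WE" unfolding WE_def \<psi>_def[symmetric]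
          by (intro continuous_intros continuous_on_compose2[OF zEc psi_cont[OF PA, folded a_def b_def \<psi>_def]]) (use \<psi>1 in auto)
        have "Fz g t - FE g t = Jf a (1-g) Wz (\<Phi> t) - Jf a (1-g) WE (\<Phi> t)"
          unfolding Fz_def FE_def Wz_def WE_def a_def using False RL_transfer[OF PA t g1 zc'] RL_transfer[OF PA t g1 zEc] by simp
        also have "\<dots> = Jf a (1-g) (\<lambda>s. Wz s + (-1) * WE s) (\<Phi> t)"
          using J_lin[OF g1 continuous_on_subset[OF Wzc sub] continuous_on_subset[OF WEc sub], of "-1"] by simp
        also have "\<dots> = Jf a (1-g) D (\<Phi> t)"
          by (rule J_cong) (use zm zEm in \<open>simp add: Wz_def WE_def D_def \<psi>_def\<close>)
        finally show ?thesis using False by simp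
      qed
      have Deq: "(if \<mu> = 1 then D u else Jf a (1 - \<mu>) D u) + \<rho> * Jf a (1 - \<kappa>) D u = 0" if u: "u \<in> {a..b}" for u
      proof -
        define t where "t = \<psi> u"
        have t: "t \<in> {m..n}" "\<Phi> t = u" using \<psi>1[OF u] by (auto simp: t_def)
        have "B t = (Fz \<mu> t - FE \<mu> t) + \<rho> * (Fz \<kappa> t - FE \<kappa> t)" unfolding B_def by (simp add: algebra_simps)
        also have "\<dots> = (if \<mu> = 1 then D u else Jf a (1 - \<mu>) D u) + \<rho> * Jf a (1 - \<kappa>) D u"
          using diffJ[OF t(1), of \<mu>] diffJ[OF t(1), of \<kappa>] assms(7,8,9) k1 t(2) by simp
        finally show ?thesis using B0[OF t(1)] by simp
      qed
      have "D (\<Phi> l) = 0" by (rule volterra_unique[OF ab Dc Da assms(7,8,9,10) Deq \<Phi>in[OF lmn]])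
      then show ?thesis unfolding D_def using \<psi>2[OF lmn] by simp
    qed
  qed
  show ?thesis using ex un unfolding zE_def by blast
qed


end
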